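(* Let $r\ge1$ be an integer. Let $(p,l)$ be an irregular pair with $\Delta_{(p,l)}\neq0$, and let $(p,l_r)\in\Psi^{\rm irr}_r$ be the (unique) irregular pair of order $r$ corresponding to $(p,l)$, with associated pair $(p,s_1,\ldots,s_r)\in\widehat{\Psi}^{\rm irr}_r$. For even $m\ge2$ put $Q(m)=\operatorname{num}\!\left(\frac{B_m}{m}\right)\Big/\operatorname{num}\!\left(\frac{B_m}{m(m-1)}\right)$ and define \[ A(p^r)=\min_{k\in\mathbb{N}_0}\left\{\, m=l_r+k\varphi(p^r) \;:\; Q(m)=p^r \,\right\}. \] Then $A(p^r)$ has a solution only if $(p,s_1,s_2,\ldots,s_r)=(p,l,l-1,\ldots,l-1)$ and $l_r-1=(l-1)p^{r-1}$. Furthermore, $A(p^r)=(l_r-1)p+1=(l-1)p^r+1$ holds, and is the smallest possible value, if and only if one of the following cases holds: (1) $l-1$ has no irregular prime factors; (2) if $q$ is an irregular prime divisor of $l-1$, then all irregular pairs $(q,l')$ satisfy $(l-1)p^r\not\equiv l'-1 \pmod{q-1}$.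
   Context: $B_n$ denotes the $n$-th Bernoulli number ($\frac{z}{e^z-1}=\sum_{n\ge0}B_n\frac{z^n}{n!}$); $\operatorname{num}(r)$ is the numerator of a rational number $r$ in lowest terms; $\varphi$ is Euler's function. For an odd prime $p$, $(p,l)$ is an irregular pair if $l$ is even, $2\le l\le p-3$ and $p\mid B_l$; a prime is irregular if it has an irregular pair. For $n\ge1$, $(p,l)$ is an irregular pair of order $n$ if $l$ is even, $2\le l<\varphi(p^n)$ and $p^n\mid B_l/l$ (divides the numerator); the set of these is $\Psi^{\rm irr}_n$. For $(p,l)\in\Psi^{\rm irr}_n$ write $l=\sum_{\nu=1}^n s_\nu\varphi(p^{\nu-1})$ with $0\le s_\nu<p$ (and $s_1$ even, $2\le s_1\le p-3$); then $(p,s_1,\ldots,s_n)$ is the associated pair and the set of these is $\widehat{\Psi}^{\rm irr}_n$. For an irregular pair $(p,l)$, $\Delta_{(p,l)}$ is the integer in $[0,p)$ with $\Delta_{(p,l)}\equiv p^{-1}\left(\frac{B_{l+\varphi(p)}}{l+\varphi(p)}-\frac{B_l}{l}\right)\pmod p$. Known fact (from earlier work): if $\Delta_{(p,l)}\neq0$, then for each $n\ge1$ there is exactly one irregular pair of order $n$ corresponding to $(p,l)$, i.e. a unique sequence $(s_\nu)_{\nu\ge1}$ with $s_1=l$ and $(p,s_1,\ldots,s_n)\in\widehat{\Psi}^{\rm irr}_n$ for all $n$; $l_n$ denotes $\sum_{\nu=1}^n s_\nu\varphi(p^{\nu-1})$. *)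

theory Defs
  imports "HOL-Number_Theory.Number_Theory" "HOL-Computational_Algebra.Formal_Power_Series"
begin

definition bernoulli :: "nat \<Rightarrow> rat" where
  "bernoulli n = fact n * fps_nth (fps_X / (fps_exp 1 - 1)) n"

definition num :: "rat \<Rightarrow> int" where
  "num r = fst (quotient_of r)"

definition den :: "rat \<Rightarrow> int" where
  "den r = snd (quotient_of r)"

definition irregular_pair :: "nat \<Rightarrow> nat \<Rightarrow> bool" where
  "irregular_pair p l \<longleftrightarrow> prime p \<and> odd p \<and> even l \<and> 2 \<le> l \<and> l + 3 \<le> p
      \<and> int p dvd num (bernoulli l)"

definition irregular_prime :: "nat \<Rightarrow> bool" where
  "irregular_prime p \<longleftrightarrow> prime p \<and> odd p \<and> (\<exists>l. irregular_pair p l)"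

definition psi_irr :: "nat \<Rightarrow> (nat \<times> nat) set" where
  "psi_irr n = {(p, l). prime p \<and> odd p \<and> even l \<and> 2 \<le> l \<and> l < totient (p ^ n)
      \<and> int (p ^ n) dvd num (bernoulli l / of_nat l)}"

definition rat_mod :: "rat \<Rightarrow> nat \<Rightarrow> nat" where
  "rat_mod y p = (THE d. d < p \<and> [int d * den y = num y] (mod int p))"

definition Delta :: "nat \<Rightarrow> nat \<Rightarrow> nat" where
  "Delta p l = rat_mod ((bernoulli (l + totient p) / of_nat (l + totient p)
                          - bernoulli l / of_nat l) / of_nat p) p"

definition lsum :: "nat \<Rightarrow> (nat \<Rightarrow> nat) \<Rightarrow> nat \<Rightarrow> nat" where
  "lsum p s n = (\<Sum>\<nu>=1..n. s \<nu> * totient (p ^ (\<nu> - 1)))"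

definition Q :: "nat \<Rightarrow> rat" where
  "Q m = of_int (num (bernoulli m / of_nat m))
         / of_int (num (bernoulli m / (of_nat m * (of_nat m - 1))))"

definition A_set :: "nat \<Rightarrow> nat \<Rightarrow> nat \<Rightarrow> nat set" where
  "A_set p r lr = {m. \<exists>k. m = lr + k * totient (p ^ r) \<and> Q m = of_nat (p ^ r)}"

definition A :: "nat \<Rightarrow> nat \<Rightarrow> nat \<Rightarrow> nat" where
  "A p r lr = (LEAST m. m \<in> A_set p r lr)"

end

theory Submission
  imports Defs
begin

lemma num_den: "x = of_int (num x) / of_int (den x)" "den x > 0" "coprime (num x) (den x)"
  unfolding num_def den_def
  by (auto intro: quotient_of_div quotient_of_denom_pos' quotient_of_coprime[of x "fst (quotient_of x)" "snd (quotient_of x)"])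

lemma num_den_unique:
  assumes "b > 0" "coprime a b" "x = of_int a / of_int b"
  shows "num x = a" "den x = b"
proof -
  have "quotient_of x = (a, b)"
    using assms by (simp add: Fract_of_int_quotient[symmetric] quotient_of_Fract)
  then show "num x = a" "den x = b" by (auto simp: num_def den_def)
qed

definition pd :: "nat \<Rightarrow> nat \<Rightarrow> rat \<Rightarrow> bool" where
  "pd p n x \<longleftrightarrow> (\<exists>a b. b \<noteq> 0 \<and> \<not> int p dvd b \<and> int p ^ n dvd a \<and> x = of_int a / of_int b)"

definition punit :: "nat \<Rightarrow> rat \<Rightarrow> bool" where
  "punit p x \<longleftrightarrow> (\<exists>a b. \<not> int p dvd a \<and> \<not> int p dvd b \<and> x = of_int a / of_int b)"

lemma pd_int: "prime p \<Longrightarrow> int p ^ n dvd a \<Longrightarrow> pd p n (of_int a)"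
  unfolding pd_def
  by (rule exI[of _ a], rule exI[of _ 1]) auto

lemma pd_int': "p \<noteq> 1 \<Longrightarrow> int p ^ n dvd a \<Longrightarrow> pd p n (of_int a)"
  unfolding pd_def
  by (rule exI[of _ a], rule exI[of _ 1]) auto

lemma pd_0 [simp]: "prime p \<Longrightarrow> pd p n 0"
  unfolding pd_def by (rule exI[of _ 0], rule exI[of _ 1]) auto

lemma pd_add:
  assumes "prime p" "pd p n x" "pd p n y" shows "pd p n (x + y)"
proof -
  obtain a b where ab: "b \<noteq> 0" "\<not> int p dvd b" "int p ^ n dvd a" "x = of_int a / of_int b"
    using assms(2) unfolding pd_def by blast
  obtain c d where cd: "d \<noteq> 0" "\<not> int p dvd d" "int p ^ n dvd c" "y = of_int c / of_int d"
    using assms(3) unfolding pd_def by blast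
  have pr: "prime (int p)" using assms(1) by auto
  show ?thesis unfolding pd_def
  proof (intro exI conjI)
    show "b * d \<noteq> 0" using ab cd by auto
    show "\<not> int p dvd b * d" using ab cd pr by (simp add: prime_dvd_mult_iff)
    show "int p ^ n dvd a * d + c * b" using ab cd by auto
    show "x + y = of_int (a * d + c * b) / of_int (b * d)" using ab cd
      by (simp add: field_simps)
  qed
qed

lemma pd_mult:
  assumes "prime p" "pd p n x" "pd p m y" shows "pd p (n + m) (x * y)"
proof -
  obtain a b where ab: "b \<noteq> 0" "\<not> int p dvd b" "int p ^ n dvd a" "x = of_int a / of_int b"
    using assms(2) unfolding pd_def by blast
  obtain c d where cd: "d \<noteq> 0" "\<not> int p dvd d" "int p ^ m dvd c" "y = of_int c / of_int d"
    using assms(3) unfolding pd_def by blast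
  have pr: "prime (int p)" using assms(1) by auto
  show ?thesis unfolding pd_def
  proof (intro exI conjI)
    show "b * d \<noteq> 0" using ab cd by auto
    show "\<not> int p dvd b * d" using ab cd pr by (simp add: prime_dvd_mult_iff)
    show "int p ^ (n + m) dvd a * c" using ab cd by (simp add: power_add mult_dvd_mono)
    show "x * y = of_int (a * c) / of_int (b * d)" using ab cd
      by (simp add: field_simps)
  qed
qed

lemma pd_uminus: "pd p n x \<Longrightarrow> pd p n (- x)"
proof -
  assume "pd p n x"
  then obtain a b where ab: "b \<noteq> 0" "\<not> int p dvd b" "int p ^ n dvd a" "x = of_int a / of_int b"
    unfolding pd_def by blast
  then show ?thesis unfolding pd_def
    by (intro exI[of _ "- a"] exI[of _ b]) auto
qed

lemma pd_diff: "prime p \<Longrightarrow> pd p n x \<Longrightarrow> pd p n y \<Longrightarrow> pd p n (x - y)"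
  using pd_add[of p n x "- y"] pd_uminus[of p n y] by simp

lemma pd_mono: "pd p n x \<Longrightarrow> m \<le> n \<Longrightarrow> pd p m x"
proof -
  assume "pd p n x" "m \<le> n"
  then obtain a b where ab: "b \<noteq> 0" "\<not> int p dvd b" "int p ^ n dvd a" "x = of_int a / of_int b"
    unfolding pd_def by blast
  have "int p ^ m dvd a" using ab(3) \<open>m \<le> n\<close> le_imp_power_dvd dvd_trans by blast
  then show ?thesis unfolding pd_def using ab by blast
qed

lemma pd_sum: "prime p \<Longrightarrow> (\<And>i. i \<in> S \<Longrightarrow> pd p n (f i)) \<Longrightarrow> pd p n (sum f S)"
  by (induction S rule: infinite_finite_induct) (auto intro: pd_add)

lemma pd_mult_int: "prime p \<Longrightarrow> pd p n x \<Longrightarrow> pd p n (of_int c * x)"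
  using pd_mult[of p 0 "of_int c" n x] pd_int[of p 0 c] by simp

lemma pd_mult_nat: "prime p \<Longrightarrow> pd p n x \<Longrightarrow> pd p n (of_nat c * x)"
  using pd_mult_int[of p n x "int c"] by simp

lemma pd_int_dvd:
  assumes "prime p" "pd p n (of_int c)" shows "int p ^ n dvd c"
proof -
  obtain a b where ab: "b \<noteq> 0" "\<not> int p dvd b" "int p ^ n dvd a" "of_int c = (of_int a / of_int b :: rat)"
    using assms(2) unfolding pd_def by blast
  have "c * b = a" using ab(1,4) by (simp add: field_simps flip: of_int_mult)
  then have "int p ^ n dvd c * b" using ab by simp
  moreover have "coprime (int p ^ n) b"
  proof -
    have "coprime (int p) b"
      using ab(2) assms(1) by (intro prime_imp_coprime) auto
    then show ?thesis by simp
  qed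
  ultimately show ?thesis using coprime_dvd_mult_left_iff by blast
qed

lemma pd_num_iff:
  assumes "prime p" "n \<ge> 1" shows "pd p n x \<longleftrightarrow> int p ^ n dvd num x"
proof
  assume "pd p n x"
  then obtain a b where ab: "b \<noteq> 0" "\<not> int p dvd b" "int p ^ n dvd a" "x = of_int a / of_int b"
    unfolding pd_def by blast
  have d: "den x > 0" and xe: "x = of_int (num x) / of_int (den x)" using num_den by auto
  have "of_int (num x) / of_int (den x) = (of_int a / of_int b :: rat)" using ab(4) xe by simp
  then have "of_int (num x) * of_int b = (of_int a * of_int (den x) :: rat)"
    using ab(1) d by (simp add: frac_eq_eq)
  then have "num x * b = a * den x" by (simp flip: of_int_mult)
  then have "int p ^ n dvd num x * b" using ab(3) by simp
  moreover have "coprime (int p ^ n) b"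
  proof -
    have "coprime (int p) b"
      using ab(2) assms(1) by (intro prime_imp_coprime) auto
    then show ?thesis by simp
  qed
  ultimately show "int p ^ n dvd num x" using coprime_dvd_mult_left_iff by blast
next
  assume h: "int p ^ n dvd num x"
  have "\<not> int p dvd den x"
  proof
    assume "int p dvd den x"
    moreover have "int p dvd num x"
    proof -
      obtain n' where "n = Suc n'" using assms(2) by (cases n) auto
      then show ?thesis using h by (auto intro: dvd_mult_left)
    qed
    ultimately have "is_unit (int p)" using num_den(3)[of x] coprime_common_divisor by blast
    then show False using assms(1) by simp
  qed
  then show "pd p n x" unfolding pd_def using num_den[of x] h
    by (intro exI[of _ "num x"] exI[of _ "den x"]) auto
qed

lemma punit_int: "\<not> int p dvd a \<Longrightarrow> p \<noteq> 1 \<Longrightarrow> punit p (of_int a)"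
  unfolding punit_def by (rule exI[of _ a], rule exI[of _ 1]) auto

lemma pd_divide:
  assumes "prime p" "pd p n x" "punit p y" shows "pd p n (x / y)"
proof -
  obtain a b where ab: "b \<noteq> 0" "\<not> int p dvd b" "int p ^ n dvd a" "x = of_int a / of_int b"
    using assms(2) unfolding pd_def by blast
  obtain c d where cd: "\<not> int p dvd c" "\<not> int p dvd d" "y = of_int c / of_int d"
    using assms(3) unfolding punit_def by blast
  have pr: "prime (int p)" using assms(1) by auto
  have c0: "c \<noteq> 0" "d \<noteq> 0" using cd by auto
  show ?thesis unfolding pd_def
  proof (intro exI conjI)
    show "b * c \<noteq> 0" using ab c0 by auto
    show "\<not> int p dvd b * c" using ab cd pr by (simp add: prime_dvd_mult_iff)
    show "int p ^ n dvd a * d" using ab by auto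
    show "x / y = of_int (a * d) / of_int (b * c)" unfolding ab(4) cd(3) using c0 ab(1)
      by (simp add: field_simps)
  qed
qed

lemma pd_cancel_unit:
  assumes "prime p" "pd p n (y * x)" "punit p y" shows "pd p n x"
proof -
  have "y \<noteq> 0" using assms(3) unfolding punit_def by auto
  then show ?thesis using pd_divide[OF assms] by simp
qed

lemma pd_shift:
  assumes "prime p" "pd p (n + r) (of_nat p ^ r * x)" shows "pd p n x"
proof -
  obtain a b where ab: "b \<noteq> 0" "\<not> int p dvd b" "int p ^ (n + r) dvd a" "of_nat p ^ r * x = of_int a / of_int b"
    using assms(2) unfolding pd_def by blast
  obtain k where k: "a = int p ^ (n + r) * k" using ab(3) by (auto elim!: dvdE)
  define c where "c = int p ^ n * k"
  have c: "a = int p ^ r * c" unfolding c_def k by (simp add: power_add)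
  have "int p ^ n dvd c" using ab(3) c assms(1) by (simp add: power_add mult.commute)
  moreover have "x = of_int c / of_int b"
  proof -
    have "of_nat p ^ r * x = of_nat p ^ r * (of_int c / of_int b :: rat)" using ab(4) c by simp
    moreover have "(of_nat p ^ r :: rat) \<noteq> 0" using assms(1) by (simp add: prime_gt_0_nat)
    ultimately show ?thesis by (metis mult_left_cancel)
  qed
  ultimately show ?thesis unfolding pd_def using ab by blast
qed

lemma pd_unshift:
  assumes "prime p" "pd p n x" shows "pd p (n + r) (of_nat p ^ r * x)"
  using pd_mult[OF assms(1) pd_int[OF assms(1), of r "int p ^ r"] assms(2)] by (simp add: add.commute)

lemma punit_pd0: "punit p x \<Longrightarrow> pd p 0 x"
  unfolding punit_def pd_def by (metis dvd_0_right power_0 one_dvd)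

lemma pd1_not_punit: "prime p \<Longrightarrow> pd p 1 x \<Longrightarrow> \<not> punit p x"
proof
  assume "prime p" "pd p 1 x" "punit p x"
  then obtain a b where ab: "b \<noteq> 0" "\<not> int p dvd b" "int p dvd a" "x = of_int a / of_int b"
    unfolding pd_def by auto
  obtain c d where cd: "\<not> int p dvd c" "\<not> int p dvd d" "x = of_int c / of_int d"
    using \<open>punit p x\<close> unfolding punit_def by blast
  have "d \<noteq> 0" using cd by auto
  have "of_int a / of_int b = (of_int c / of_int d :: rat)" using ab cd by simp
  then have "of_int a * of_int d = (of_int c * of_int b :: rat)" using ab(1) \<open>d \<noteq> 0\<close> by (simp add: frac_eq_eq)
  then have "a * d = c * b" by (simp flip: of_int_mult)
  then have "int p dvd c * b" using ab by (metis dvd_mult2)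
  then show False using cd ab \<open>prime p\<close> by (simp add: prime_dvd_mult_iff)
qed

unbundle fps_syntax

definition bG :: "rat fps" where "bG = fps_X / (fps_exp 1 - 1)"

lemma bG_nth: "bG $ n = bernoulli n / fact n"
  unfolding bernoulli_def bG_def by (simp add: field_simps)

lemma subdeg_E1: "subdegree (fps_exp (1::rat) - 1) = 1"
  by (rule subdegreeI) auto

lemma E1_nz: "fps_exp (1::rat) - 1 \<noteq> 0"
proof
  assume "fps_exp (1::rat) - 1 = 0"
  then have "(fps_exp (1::rat) - 1) $ 1 = 0" by simp
  then show False by simp
qed

lemma bG_times: "bG * (fps_exp 1 - 1) = fps_X"
  unfolding bG_def by (rule fps_times_divide_eq) (use E1_nz subdeg_E1 in auto)

lemma geom_exp: "(\<Sum>j<N. fps_exp (of_nat j :: rat)) * (fps_exp 1 - 1) = fps_exp (of_nat N) - 1"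
proof (induction N)
  case 0 then show ?case by simp
next
  case (Suc N)
  have "fps_exp (of_nat N :: rat) * (fps_exp 1 - 1) = fps_exp (of_nat (Suc N)) - fps_exp (of_nat N)"
    by (simp add: algebra_simps fps_exp_add_mult[symmetric])
  then show ?case using Suc by (simp add: algebra_simps)
qed

lemma gen_identity: "fps_X * (\<Sum>j<N. fps_exp (of_nat j :: rat)) = bG * (fps_exp (of_nat N) - 1)"
proof -
  have "bG * (fps_exp (of_nat N) - 1) = bG * ((\<Sum>j<N. fps_exp (of_nat j :: rat)) * (fps_exp 1 - 1))"
    by (simp add: geom_exp)
  also have "\<dots> = (\<Sum>j<N. fps_exp (of_nat j :: rat)) * (bG * (fps_exp 1 - 1))"
    by (simp add: ac_simps)
  also have "\<dots> = fps_X * (\<Sum>j<N. fps_exp (of_nat j :: rat))" by (simp add: bG_times mult.commute)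
  finally show ?thesis by simp
qed

lemma aux_cancel: "s \<noteq> 0 \<Longrightarrow> a \<noteq> 0 \<Longrightarrow> b \<noteq> 0 \<Longrightarrow> (a * b * c) / (a * (s * b)) = c / (s::rat)"
  by (simp add: field_simps)

lemma fact_binom_aux:
  assumes "i \<le> k"
  shows "(fact k :: rat) / (fact i * fact (Suc k - i)) = of_nat (k choose i) / of_nat (Suc k - i)"
proof -
  have "Suc k - i = Suc (k - i)" using assms by simp
  then have e1: "(fact (Suc k - i) :: rat) = of_nat (Suc k - i) * fact (k - i)" by simp
  have e2: "(fact k :: rat) = fact i * fact (k - i) * of_nat (k choose i)"
    using assms by (simp add: binomial_fact)
  have nz: "(of_nat (Suc k - i) :: rat) \<noteq> 0" "(fact i :: rat) \<noteq> 0" "(fact (k - i) :: rat) \<noteq> 0"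
    using assms by auto
  have "(fact k :: rat) / (fact i * fact (Suc k - i)) =
     (fact i * fact (k - i) * of_nat (k choose i)) / (fact i * (of_nat (Suc k - i) * fact (k - i)))"
    by (simp only: e1 e2)
  also have "\<dots> = of_nat (k choose i) / of_nat (Suc k - i)"
    using nz by (rule aux_cancel)
  finally show ?thesis .
qed

lemma powsum:
  "(\<Sum>j<N. of_nat j ^ k :: rat) =
     (\<Sum>i\<le>k. of_nat (k choose i) * bernoulli i * of_nat N ^ (Suc k - i) / of_nat (Suc k - i))"
proof -
  have "(fps_X * (\<Sum>j<N. fps_exp (of_nat j :: rat))) $ Suc k = (bG * (fps_exp (of_nat N) - 1)) $ Suc k"
    by (simp only: gen_identity)
  moreover have "(fps_X * (\<Sum>j<N. fps_exp (of_nat j :: rat))) $ Suc k = (\<Sum>j<N. of_nat j ^ k / fact k :: rat)"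
    by (simp only: fps_X_mult_nth fps_sum_nth fps_exp_nth) simp
  moreover have "(bG * (fps_exp (of_nat N) - 1)) $ Suc k = (\<Sum>i=0..Suc k. bG $ i * (fps_exp (of_nat N) - 1) $ (Suc k - i))"
    by (rule fps_mult_nth)
  ultimately have "(\<Sum>j<N. of_nat j ^ k / fact k :: rat) =
      (\<Sum>i=0..Suc k. bG $ i * (fps_exp (of_nat N) - 1) $ (Suc k - i))"
    by simp
  also have "\<dots> = (\<Sum>i=0..k. bG $ i * (fps_exp (of_nat N) - 1) $ (Suc k - i))"
    by (simp add: sum.atLeast0_atMost_Suc)
  also have "\<dots> = (\<Sum>i\<le>k. bernoulli i / fact i * (of_nat N ^ (Suc k - i) / fact (Suc k - i)))"
    by (intro sum.cong) (auto simp: bG_nth atLeast0AtMost)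
  finally have eq: "(\<Sum>j<N. of_nat j ^ k / fact k :: rat) =
     (\<Sum>i\<le>k. bernoulli i / fact i * (of_nat N ^ (Suc k - i) / fact (Suc k - i)))" .
  have "(\<Sum>j<N. of_nat j ^ k :: rat) = fact k * (\<Sum>j<N. of_nat j ^ k / fact k :: rat)"
    by (simp add: sum_distrib_left)
  also have "\<dots> = (\<Sum>i\<le>k. fact k * (bernoulli i / fact i * (of_nat N ^ (Suc k - i) / fact (Suc k - i))))"
    by (simp add: eq sum_distrib_left)
  also have "\<dots> = (\<Sum>i\<le>k. of_nat (k choose i) * bernoulli i * of_nat N ^ (Suc k - i) / of_nat (Suc k - i))"
  proof (intro sum.cong refl)
    fix i assume "i \<in> {..k}"
    then have "(fact k :: rat) / (fact i * fact (Suc k - i)) = of_nat (k choose i) / of_nat (Suc k - i)"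
      by (intro fact_binom_aux) auto
    then show "fact k * (bernoulli i / fact i * (of_nat N ^ (Suc k - i) / fact (Suc k - i))) =
      of_nat (k choose i) * bernoulli i * of_nat N ^ (Suc k - i) / of_nat (Suc k - i)"
      by (simp add: field_simps)
  qed
  finally show ?thesis .
qed

lemma factor_out:
  fixes p m :: nat
  assumes "prime p" "m > 0"
  shows "\<exists>v u. m = p ^ v * u \<and> \<not> p dvd u"
  using assms(2)
proof (induction m rule: less_induct)
  case (less m)
  show ?case
  proof (cases "p dvd m")
    case True
    then obtain m' where m': "m = p * m'" by auto
    have "m' < m" "m' > 0" using m' less.prems assms(1) prime_gt_1_nat[of p] by (auto simp: m')
    then obtain v u where "m' = p ^ v * u" "\<not> p dvd u" using less.IH by blast
    then show ?thesis by (intro exI[of _ "Suc v"] exI[of _ u]) (simp add: m')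
  next
    case False then show ?thesis by (intro exI[of _ 0] exI[of _ m]) simp
  qed
qed

lemma pow_ge_aux3: "v \<ge> 1 \<Longrightarrow> v + 2 \<le> (3::nat) ^ v"
proof (induction v)
  case 0 then show ?case by simp
next
  case (Suc v) then show ?case by (cases "v = 0") auto
qed

lemma pow_ge_aux5: "v \<ge> 1 \<Longrightarrow> v + 4 \<le> (5::nat) ^ v"
proof (induction v)
  case 0 then show ?case by simp
next
  case (Suc v) then show ?case by (cases "v = 0") auto
qed

lemma pd_pow_div:
  assumes "prime p" "m = p ^ v * u" "\<not> p dvd u" "e + v \<le> a"
  shows "pd p e (of_nat p ^ a / of_nat m)"
proof -
  have u0: "u \<noteq> 0" using assms(3) by (metis dvd_0_right)
  have p0: "(of_nat p :: rat) \<noteq> 0" using assms(1) by (simp add: prime_gt_0_nat)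
  have "(of_nat p ^ a / of_nat m :: rat) = of_int (int p ^ (a - v)) / of_int (int u)"
  proof -
    have "(of_nat p ^ a :: rat) = of_nat p ^ v * of_nat p ^ (a - v)"
      using assms(4) by (simp flip: power_add)
    then show ?thesis using p0 u0 by (simp add: assms(2))
  qed
  moreover have "int p ^ e dvd int p ^ (a - v)" using assms(4) by (intro le_imp_power_dvd) simp
  ultimately show ?thesis unfolding pd_def using u0 assms(3)
    by (intro exI[of _ "int p ^ (a - v)"] exI[of _ "int u"]) (auto simp flip: of_nat_dvd_iff)
qed


lemma pd_p_pow_m:
  assumes "prime p" "odd p" "m \<ge> 2"
  shows "pd p 1 (of_nat p ^ (m - 1) / of_nat m)"
proof -
  have "m > 0" using assms(3) by simp
  then obtain v u where vu: "m = p ^ v * u" "\<not> p dvd u" using factor_out[OF assms(1)] by blast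
  have "p \<ge> 2" using assms(1) by (rule prime_ge_2_nat)
  moreover have "p \<noteq> 2" using assms(2) by auto
  ultimately have "p \<ge> 3" by simp
  have "1 + v \<le> m - 1"
  proof (cases "v = 0")
    case True then show ?thesis using assms by simp
  next
    case False
    have "v + 2 \<le> 3 ^ v" using False pow_ge_aux3 by simp
    also have "\<dots> \<le> p ^ v" using \<open>p \<ge> 3\<close> by (simp add: power_mono)
    also have "\<dots> \<le> m"
    proof -
      have "u \<ge> 1" using vu(2) by (metis dvd_0_right less_one not_le)
      then have "p ^ v * 1 \<le> p ^ v * u" by (rule mult_left_mono) simp
      then show ?thesis using vu(1) by simp
    qed
    finally show ?thesis by simp
  qed
  then show ?thesis using pd_pow_div[OF assms(1) vu] by simp
qed

definition psum :: "nat \<Rightarrow> nat \<Rightarrow> int" where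
  "psum N k = (\<Sum>j<N. int j ^ k)"

lemma psum_rat: "of_int (psum N k) = (\<Sum>j<N. of_nat j ^ k :: rat)"
  unfolding psum_def by simp

lemma psum_split: "p > 0 \<Longrightarrow> k \<ge> 1 \<Longrightarrow> psum p k = (\<Sum>j\<in>{1..<p}. int j ^ k)"
proof -
  assume "p > 0" "k \<ge> 1"
  then have "{..<p} = insert 0 {1..<p}" by auto
  then show ?thesis unfolding psum_def using \<open>k \<ge> 1\<close> by (simp add: power_0_left)
qed

lemma psum_odd:
  assumes "prime p" "odd p" "odd k"
  shows "int p dvd psum p k"
proof -
  have k1: "k \<ge> 1" using assms(3) by (cases k) auto
  have p0: "p > 0" using assms(1) prime_gt_0_nat by blast
  define S where "S = (\<Sum>j\<in>{1..<p}. int j ^ k)"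
  have "S = (\<Sum>j\<in>{1..<p}. int (p + 1 - Suc j) ^ k)"
    unfolding S_def by (rule sum.atLeastLessThan_rev)
  also have "[\<dots> = (\<Sum>j\<in>{1..<p}. - (int j ^ k))] (mod int p)"
  proof (rule cong_sum)
    fix j assume "j \<in> {1..<p}"
    then have "int (p + 1 - Suc j) = int p - int j" by auto
    moreover have "[int p - int j = - int j] (mod int p)" by (simp add: cong_def)
    then have "[(int p - int j) ^ k = (- int j) ^ k] (mod int p)" by (rule cong_pow)
    ultimately show "[int (p + 1 - Suc j) ^ k = - (int j ^ k)] (mod int p)"
      using assms(3) by (simp add: power_minus_odd)
  qed
  also have "(\<Sum>j\<in>{1..<p}. - (int j ^ k)) = - S" unfolding S_def by (simp add: sum_negf)
  finally have "[S = - S] (mod int p)" .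
  then have "int p dvd 2 * S" by (simp add: cong_iff_dvd_diff)
  moreover have "\<not> int p dvd 2"
  proof
    assume "int p dvd 2"
    then have "p dvd 2" by presburger
    then have "p \<le> 2" by (simp add: dvd_imp_le)
    then show False using assms(1,2) prime_ge_2_nat[of p] by (cases "p = 2") auto
  qed
  ultimately have "int p dvd S" using assms(1) by (simp add: prime_dvd_mult_iff)
  then show ?thesis using psum_split[OF p0 k1] S_def by simp
qed

lemma psum_fermat:
  assumes "prime p" "(p - 1) dvd k" "k \<ge> 1"
  shows "int p dvd psum p k + 1"
proof -
  have p0: "p > 0" using assms(1) prime_gt_0_nat by blast
  have "[(\<Sum>j\<in>{1..<p}. int j ^ k) = (\<Sum>j\<in>{1..<p}. 1)] (mod int p)"
  proof (rule cong_sum)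
    fix j assume j: "j \<in> {1..<p}"
    then have "\<not> p dvd j" by (auto dest: dvd_imp_le)
    then have "[j ^ (p - 1) = 1] (mod p)" using fermat_theorem[OF assms(1)] by blast
    then have "[(j ^ (p - 1)) ^ (k div (p - 1)) = 1 ^ (k div (p - 1))] (mod p)" by (rule cong_pow)
    then have "[j ^ k = 1] (mod p)" using assms(2) by (simp flip: power_mult)
    then show "[int j ^ k = 1] (mod int p)" by (metis cong_int_iff of_nat_1 of_nat_power)
  qed
  then have "[psum p k = int p - 1] (mod int p)" using psum_split[OF p0 assms(3)] p0 by simp
  then have "[psum p k + 1 = int p - 1 + 1] (mod int p)" by (rule cong_add) simp
  then show ?thesis by (simp add: cong_0_iff[symmetric] cong_def)
qed

lemma powsum_N:
  "of_int (psum N k) = of_nat N * bernoulli k +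
     (\<Sum>i<k. of_nat (k choose i) * bernoulli i * of_nat N ^ (Suc k - i) / of_nat (Suc k - i))"
  unfolding psum_rat powsum by (simp add: lessThan_Suc_atMost[symmetric])

lemma pd_add_cancel: "prime p \<Longrightarrow> pd p n (x - y) \<Longrightarrow> pd p n y \<Longrightarrow> pd p n x"
  using pd_add[of p n "x - y" y] by simp

lemma pB_main:
  assumes "prime p" "odd p"
  shows "pd p 0 (of_nat p * bernoulli k) \<and> pd p 1 (of_nat p * bernoulli k - of_int (psum p k))"
proof (induction k rule: less_induct)
  case (less k)
  have rest: "pd p 1 (\<Sum>i<k. of_nat (k choose i) * bernoulli i * of_nat p ^ (Suc k - i) / of_nat (Suc k - i))"
  proof (rule pd_sum[OF assms(1)])
    fix i assume i: "i \<in> {..<k}"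
    have h0: "pd p 0 (of_nat p * bernoulli i)" using less.IH i by auto
    have h1: "pd p 1 (of_nat p ^ (Suc k - i - 1) / of_nat (Suc k - i))"
      using pd_p_pow_m[OF assms, of "Suc k - i"] i by simp
    have E: "of_nat (k choose i) * bernoulli i * of_nat p ^ (Suc k - i) / of_nat (Suc k - i) =
      of_nat (k choose i) * ((of_nat p * bernoulli i) * (of_nat p ^ (Suc k - i - 1) / of_nat (Suc k - i)))"
    proof -
      have "Suc k - i = Suc (Suc k - i - 1)" using i by simp
      then have "(of_nat p ^ (Suc k - i) :: rat) = of_nat p ^ Suc (Suc k - i - 1)" by (rule arg_cong)
      then have "(of_nat p ^ (Suc k - i) :: rat) = of_nat p * of_nat p ^ (Suc k - i - 1)"
        by (simp only: power_Suc)
      then show ?thesis by (simp only: times_divide_eq_right mult.assoc mult.left_commute)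
    qed
    have P: "pd p 1 (of_nat (k choose i) * ((of_nat p * bernoulli i) * (of_nat p ^ (Suc k - i - 1) / of_nat (Suc k - i))))"
      using pd_mult[OF assms(1) h0 h1] by (intro pd_mult_nat[OF assms(1)]) simp
    show "pd p 1 (of_nat (k choose i) * bernoulli i * of_nat p ^ (Suc k - i) / of_nat (Suc k - i))"
      unfolding E by (rule P)
  qed
  have e: "of_nat p * bernoulli k - of_int (psum p k) =
     - (\<Sum>i<k. of_nat (k choose i) * bernoulli i * of_nat p ^ (Suc k - i) / of_nat (Suc k - i))"
    unfolding powsum_N by simp
  have A: "pd p 1 (of_nat p * bernoulli k - of_int (psum p k))" unfolding e by (rule pd_uminus[OF rest])
  have E: "of_nat p * bernoulli k = (of_nat p * bernoulli k - of_int (psum p k)) + of_int (psum p k)" by simp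
  have "pd p 0 (of_int (psum p k))" by (rule pd_int[OF assms(1)]) simp
  moreover have A0: "pd p 0 (of_nat p * bernoulli k - of_int (psum p k))" using pd_mono[OF A] by simp
  ultimately have "pd p 0 ((of_nat p * bernoulli k - of_int (psum p k)) + of_int (psum p k))"
    using pd_add[OF assms(1)] by blast
  then have "pd p 0 (of_nat p * bernoulli k)" using E by simp
  then show ?case using A by simp
qed

lemma B_odd_int:
  assumes "prime p" "odd p" "odd k"
  shows "pd p 0 (bernoulli k)"
proof -
  have A: "pd p 1 (of_nat p * bernoulli k - of_int (psum p k))" using pB_main[OF assms(1,2)] by blast
  have "pd p 1 (of_int (psum p k))" using psum_odd[OF assms] by (intro pd_int[OF assms(1)]) simp
  then have "pd p 1 (of_nat p * bernoulli k)" using pd_add_cancel[OF assms(1) A] by simp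
  then have "pd p (0 + 1) (of_nat p ^ 1 * bernoulli k)" by simp
  then show ?thesis by (rule pd_shift[OF assms(1)])
qed

lemma vSC:
  assumes "prime p" "odd p" "(p - 1) dvd k" "k \<ge> 1"
  shows "\<not> int p dvd num (bernoulli k / of_nat k)"
proof
  assume h: "int p dvd num (bernoulli k / of_nat k)"
  then have "pd p 1 (bernoulli k / of_nat k)" using pd_num_iff[OF assms(1), of 1] by simp
  then have "pd p 1 (of_nat k * (bernoulli k / of_nat k))" by (rule pd_mult_nat[OF assms(1)])
  then have "pd p 1 (bernoulli k)" using assms(4) by simp
  then have "pd p (1 + 1) (of_nat p ^ 1 * bernoulli k)" by (rule pd_unshift[OF assms(1)])
  then have B: "pd p 1 (of_nat p * bernoulli k)" using pd_mono by fastforce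
  have A: "pd p 1 (of_nat p * bernoulli k - of_int (psum p k))" using pB_main[OF assms(1,2)] by blast
  have C: "pd p 1 (of_int (psum p k + 1))" using psum_fermat[OF assms(1,3,4)] by (intro pd_int[OF assms(1)]) simp
  have "(1::rat) = of_int (psum p k + 1) + (of_nat p * bernoulli k - of_int (psum p k)) - of_nat p * bernoulli k"
    by simp
  then have "pd p 1 (of_int 1)" using pd_diff[OF assms(1) pd_add[OF assms(1) C A] B] by simp
  then have "int p ^ 1 dvd 1" by (rule pd_int_dvd[OF assms(1)])
  then show False using assms(1) by simp
qed

lemma bernoulli_even_nz:
  assumes "even k" "k \<ge> 2" shows "bernoulli k \<noteq> 0"
proof
  assume "bernoulli k = 0"
  then have "int 3 dvd num (bernoulli k / of_nat k)" by (simp add: num_def)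
  moreover have "\<not> int 3 dvd num (bernoulli k / of_nat k)"
    by (rule vSC) (use assms in auto)
  ultimately show False by simp
qed

lemma binom_cong_aux:
  fixes x y N :: int
  shows "N ^ 2 dvd (x - N * y) ^ Suc k - x ^ Suc k + of_nat (Suc k) * x ^ k * N * y"
proof (induction k)
  case 0 then show ?case by simp
next
  case (Suc k)
  then obtain c where c: "(x - N * y) ^ Suc k - x ^ Suc k + of_nat (Suc k) * x ^ k * N * y = N ^ 2 * c"
    by (auto elim!: dvdE)
  then have e: "(x - N * y) ^ Suc k = x ^ Suc k - of_nat (Suc k) * x ^ k * N * y + N ^ 2 * c" by simp
  have "(x - N * y) ^ Suc (Suc k) - x ^ Suc (Suc k) + of_nat (Suc (Suc k)) * x ^ Suc k * N * y
      = (x - N * y) * (x - N * y) ^ Suc k - x ^ Suc (Suc k) + of_nat (Suc (Suc k)) * x ^ Suc k * N * y"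
    by simp
  also have "\<dots> = N ^ 2 * (c * x + of_nat (Suc k) * x ^ k * y ^ 2 - N * y * c)"
    unfolding e by (simp add: algebra_simps power2_eq_square)
  finally show ?case by simp
qed

lemma mult_mod_bij:
  fixes a N :: nat
  assumes "coprime a N" "N > 0"
  shows "bij_betw (\<lambda>j. j * a mod N) {..<N} {..<N}"
proof -
  have inj: "inj_on (\<lambda>j. j * a mod N) {..<N}"
  proof (rule inj_onI)
    fix i j assume ij: "i \<in> {..<N}" "j \<in> {..<N}" "i * a mod N = j * a mod N"
    then have "[i * a = j * a] (mod N)" by (simp add: cong_def)
    then have "[i = j] (mod N)" using assms(1) by (simp add: cong_mult_rcancel_nat coprime_commute)
    then show "i = j" using ij by (simp add: cong_def)
  qed
  have "(\<lambda>j. j * a mod N) ` {..<N} \<subseteq> {..<N}" using assms(2) by auto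
  then have "(\<lambda>j. j * a mod N) ` {..<N} = {..<N}" using endo_inj_surj[OF _ _ inj] by simp
  then show ?thesis using inj by (simp add: bij_betw_def)
qed

definition vT :: "nat \<Rightarrow> nat \<Rightarrow> nat \<Rightarrow> int" where
  "vT N a k = (\<Sum>j<N. int j ^ (k - 1) * int (j * a div N))"

lemma voronoi_int:
  assumes "coprime a N" "N > 0" "k \<ge> 1"
  shows "int N ^ 2 dvd (int a ^ k - 1) * psum N k - of_nat k * int a ^ (k - 1) * int N * vT N a k"
proof -
  obtain k1 where k1: "k = Suc k1" using assms(3) by (cases k) auto
  have perm: "(\<Sum>j<N. int (j * a mod N) ^ k) = psum N k"
    unfolding psum_def
    using sum.reindex_bij_betw[OF mult_mod_bij[OF assms(1,2)], of "\<lambda>j. int j ^ k"] by simp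
  have each: "int N ^ 2 dvd int (j * a mod N) ^ k - ((int j * int a) ^ k - of_nat k * (int j * int a) ^ (k - 1) * int N * int (j * a div N))"
    for j
  proof -
    define X where "X = int j * int a"
    define Y where "Y = int (j * a div N)"
    define M where "M = int (j * a mod N)"
    have eqM: "M = X - int N * Y"
    proof -
      have "j * a = N * (j * a div N) + j * a mod N" by simp
      then have "int (j * a) = int N * int (j * a div N) + int (j * a mod N)" by (metis of_nat_add of_nat_mult)
      then show ?thesis unfolding M_def X_def Y_def by simp
    qed
    have h: "int N ^ 2 dvd (X - int N * Y) ^ Suc k1 - X ^ Suc k1 + of_nat (Suc k1) * X ^ k1 * int N * Y"
      by (rule binom_cong_aux)
    have "M ^ k - (X ^ k - of_nat k * X ^ (k - 1) * int N * Y) =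
        (X - int N * Y) ^ Suc k1 - X ^ Suc k1 + of_nat (Suc k1) * X ^ k1 * int N * Y"
      unfolding eqM k1 by simp
    then show ?thesis using h unfolding M_def X_def Y_def by simp
  qed
  have "int N ^ 2 dvd (\<Sum>j<N. int (j * a mod N) ^ k - ((int j * int a) ^ k - of_nat k * (int j * int a) ^ (k - 1) * int N * int (j * a div N)))"
    by (rule dvd_sum) (rule each)
  also have "(\<Sum>j<N. int (j * a mod N) ^ k - ((int j * int a) ^ k - of_nat k * (int j * int a) ^ (k - 1) * int N * int (j * a div N)))
     = psum N k - (int a ^ k * psum N k - of_nat k * int a ^ (k - 1) * int N * vT N a k)"
    unfolding sum_subtractf perm
    by (simp add: psum_def vT_def sum_distrib_left power_mult_distrib algebra_simps)
  finally have "int N ^ 2 dvd - ((int a ^ k - 1) * psum N k - of_nat k * int a ^ (k - 1) * int N * vT N a k)"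
    by (simp add: algebra_simps)
  then show ?thesis by (simp only: dvd_minus_iff)
qed

lemma m_bound5:
  assumes "prime p" "p \<ge> 5" "m \<ge> 3" "m = p ^ v * u" "\<not> p dvd u"
  shows "v + 3 \<le> m"
proof (cases "v = 0")
  case True then show ?thesis using assms by simp
next
  case False
  have "v + 4 \<le> 5 ^ v" using False pow_ge_aux5 by simp
  also have "\<dots> \<le> p ^ v" using assms(2) by (simp add: power_mono)
  also have "\<dots> \<le> m"
  proof -
    have "u \<ge> 1" using assms(5) by (metis dvd_0_right less_one not_le)
    then have "p ^ v * 1 \<le> p ^ v * u" by (rule mult_left_mono) simp
    then show ?thesis using assms(4) by simp
  qed
  finally show ?thesis by simp
qed

lemma E_pd:
  assumes "prime p" "p \<ge> 5" "r \<ge> 1" "k \<ge> 2" "even k"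
  shows "pd p (2 * r) (\<Sum>i<k. of_nat (k choose i) * bernoulli i * of_nat (p ^ r) ^ (Suc k - i) / of_nat (Suc k - i))"
proof -
  have podd: "odd p" using assms(1,2) by (intro prime_odd_nat) auto
  have set: "{..<k} = insert (k - 1) {..<k - 1}" using assms(4) by auto
  have t1: "pd p (2 * r) (of_nat (k choose (k - 1)) * bernoulli (k - 1) * of_nat (p ^ r) ^ (Suc k - (k - 1)) / of_nat (Suc k - (k - 1)))"
  proof -
    have b: "pd p 0 (bernoulli (k - 1))" using B_odd_int[OF assms(1) podd] assms(4,5) by simp
    have "pd p (2 * r) (of_nat p ^ (2 * r) / of_nat 2)"
      by (rule pd_pow_div[OF assms(1), of 2 0 2]) (use assms(2) in \<open>auto dest: dvd_imp_le\<close>)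
    then have "pd p (0 + 2 * r) (bernoulli (k - 1) * (of_nat p ^ (2 * r) / of_nat 2))"
      by (rule pd_mult[OF assms(1) b])
    then have "pd p (2 * r) (of_nat (k choose (k - 1)) * (bernoulli (k - 1) * (of_nat p ^ (2 * r) / of_nat 2)))"
      by (intro pd_mult_nat[OF assms(1)]) simp
    moreover have "Suc k - (k - 1) = 2" using assms(4) by simp
    moreover have "(of_nat (p ^ r) :: rat) ^ 2 = of_nat p ^ (2 * r)" by (simp flip: power_mult add: mult.commute)
    ultimately show ?thesis by (simp add: mult.assoc)
  qed
  have t2: "pd p (2 * r) (of_nat (k choose i) * bernoulli i * of_nat (p ^ r) ^ (Suc k - i) / of_nat (Suc k - i))"
    if i: "i < k - 1" for i
  proof -
    define m where "m = Suc k - i"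
    have m3: "m \<ge> 3" using i unfolding m_def by simp
    obtain v u where vu: "m = p ^ v * u" "\<not> p dvd u" using factor_out[OF assms(1), of m] m3 by auto
    have vm: "v + 3 \<le> m" by (rule m_bound5[OF assms(1,2) m3 vu])
    have "r * (m - 2) \<ge> m - 2" using assms(3) by simp
    then have rm: "2 * r + v \<le> r * m - 1"
      using vm m3 by (simp add: diff_mult_distrib2 algebra_simps)
    have h1: "pd p (2 * r) (of_nat p ^ (r * m - 1) / of_nat m)"
      by (rule pd_pow_div[OF assms(1) vu rm])
    have h0: "pd p 0 (of_nat p * bernoulli i)" using pB_main[OF assms(1) podd] by blast
    have "pd p (0 + 2 * r) ((of_nat p * bernoulli i) * (of_nat p ^ (r * m - 1) / of_nat m))"
      by (rule pd_mult[OF assms(1) h0 h1])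
    then have P: "pd p (2 * r) (of_nat (k choose i) * ((of_nat p * bernoulli i) * (of_nat p ^ (r * m - 1) / of_nat m)))"
      by (intro pd_mult_nat[OF assms(1)]) simp
    have "r * m = Suc (r * m - 1)" using assms(3) m3 by (simp add: Suc_le_eq)
    then have "(of_nat (p ^ r) :: rat) ^ m = of_nat p * of_nat p ^ (r * m - 1)"
      by (metis of_nat_power power_Suc power_mult)
    then have E: "of_nat (k choose i) * bernoulli i * of_nat (p ^ r) ^ m / of_nat m =
      (of_nat (k choose i) * ((of_nat p * bernoulli i) * (of_nat p ^ (r * m - 1) / of_nat m)) :: rat)"
      by (simp only: times_divide_eq_right mult.assoc mult.left_commute)
    show ?thesis using P unfolding m_def[symmetric] E .
  qed
  show ?thesis unfolding set
    by (simp only: sum.insert finite_lessThan lessThan_iff less_irrefl simp_thms)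
       (intro pd_add[OF assms(1) t1] pd_sum[OF assms(1)] t2, simp)
qed

lemma voronoi:
  assumes "prime p" "p \<ge> 5" "r \<ge> 1" "coprime a p" "k \<ge> 2" "even k" "\<not> p dvd k"
  shows "pd p r ((of_nat a ^ k - 1) * (bernoulli k / of_nat k) - of_nat a ^ (k - 1) * of_int (vT (p ^ r) a k))"
proof -
  define N where "N = p ^ r"
  have N0: "N > 0" using assms(1) prime_gt_0_nat unfolding N_def by simp
  have cop: "coprime a N" unfolding N_def using assms(4) by simp
  define S where "S = psum N k"
  define T where "T = vT N a k"
  define E where "E = (\<Sum>i<k. of_nat (k choose i) * bernoulli i * of_nat N ^ (Suc k - i) / of_nat (Suc k - i) :: rat)"
  have dz: "int N ^ 2 dvd (int a ^ k - 1) * S - of_nat k * int a ^ (k - 1) * int N * T"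
    unfolding S_def T_def using voronoi_int[OF cop N0] assms(5) by simp
  have "int p ^ (2 * r) dvd (int a ^ k - 1) * S - of_nat k * int a ^ (k - 1) * int N * T"
    using dz unfolding N_def by (simp add: power_mult mult.commute)
  then have Z: "pd p (2 * r) (of_int ((int a ^ k - 1) * S - of_nat k * int a ^ (k - 1) * int N * T))"
    by (rule pd_int[OF assms(1)])
  have SE: "of_int S = of_nat N * bernoulli k + E" unfolding S_def E_def by (rule powsum_N)
  have Epd: "pd p (2 * r) E" unfolding E_def N_def by (rule E_pd[OF assms(1,2,3,5,6)])
  have "pd p (2 * r) ((of_nat a ^ k - 1) * E)"
    using pd_mult_int[OF assms(1) Epd, of "int a ^ k - 1"] by simp
  then have "pd p (2 * r) (of_int ((int a ^ k - 1) * S - of_nat k * int a ^ (k - 1) * int N * T) - (of_nat a ^ k - 1) * E)"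
    by (rule pd_diff[OF assms(1) Z])
  moreover have "of_int ((int a ^ k - 1) * S - of_nat k * int a ^ (k - 1) * int N * T) - (of_nat a ^ k - 1) * E
     = of_nat p ^ r * ((of_nat a ^ k - 1) * bernoulli k - of_nat k * of_nat a ^ (k - 1) * of_int T)"
    using SE unfolding N_def by (simp add: algebra_simps)
  ultimately have "pd p (r + r) (of_nat p ^ r * ((of_nat a ^ k - 1) * bernoulli k - of_nat k * of_nat a ^ (k - 1) * of_int T))"
    by (simp add: mult_2)
  then have W: "pd p r ((of_nat a ^ k - 1) * bernoulli k - of_nat k * of_nat a ^ (k - 1) * of_int T)"
    by (rule pd_shift[OF assms(1)])
  have ku: "punit p (of_nat k)" using punit_int[of p "int k"] assms(2,7) by (simp add: int_dvd_int_iff)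
  have "pd p r (((of_nat a ^ k - 1) * bernoulli k - of_nat k * of_nat a ^ (k - 1) * of_int T) / of_nat k)"
    by (rule pd_divide[OF assms(1) W ku])
  moreover have "((of_nat a ^ k - 1) * bernoulli k - of_nat k * of_nat a ^ (k - 1) * of_int T) / of_nat k =
     (of_nat a ^ k - 1) * (bernoulli k / of_nat k) - of_nat a ^ (k - 1) * (of_int T :: rat)"
    using assms(5) by (simp add: field_simps)
  ultimately show ?thesis unfolding T_def N_def by simp
qed

lemma pow_cong_tot:
  fixes a m k k' :: nat
  assumes "coprime a m" "[k = k'] (mod totient m)"
  shows "[a ^ k = a ^ k'] (mod m)"
proof -
  define t where "t = totient m"
  have e: "[a ^ t = 1] (mod m)" unfolding t_def using assms(1) by (rule euler_theorem)
  have gen: "[a ^ x = a ^ (x mod t)] (mod m)" for x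
  proof -
    have "a ^ x = (a ^ t) ^ (x div t) * a ^ (x mod t)"
      by (metis div_mult_mod_eq power_add power_mult mult.commute)
    moreover have "[(a ^ t) ^ (x div t) * a ^ (x mod t) = 1 ^ (x div t) * a ^ (x mod t)] (mod m)"
      by (intro cong_mult cong_pow e cong_refl)
    ultimately show ?thesis by simp
  qed
  have "k mod t = k' mod t" using assms(2) unfolding t_def cong_def by simp
  then show ?thesis using gen[of k] gen[of k'] by (metis cong_sym cong_trans)
qed

lemma pow_cong_j:
  fixes p r k k' j :: nat
  assumes "prime p" "[k = k'] (mod totient (p ^ r))" "r \<le> k" "r \<le> k'"
  shows "[j ^ k = j ^ k'] (mod p ^ r)"
proof (cases "p dvd j")
  case True
  have "p ^ r dvd j ^ k"
    using dvd_trans[OF le_imp_power_dvd[OF assms(3)] dvd_power_same[OF True]] .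
  moreover have "p ^ r dvd j ^ k'"
    using dvd_trans[OF le_imp_power_dvd[OF assms(4)] dvd_power_same[OF True]] .
  ultimately show ?thesis by (simp add: cong_def)
next
  case False
  then have "coprime p j" using assms(1) by (intro prime_imp_coprime) auto
  then have "coprime j p" by (simp add: coprime_commute)
  then have "coprime j (p ^ r)" by simp
  then show ?thesis using pow_cong_tot assms(2) by blast
qed

lemma cong_pred:
  fixes k k' m :: nat
  assumes "[k = k'] (mod m)" "k \<ge> 1" "k' \<ge> 1"
  shows "[k - 1 = k' - 1] (mod m)"
proof -
  have "[(k - 1) + 1 = (k' - 1) + 1] (mod m)" using assms by simp
  then show ?thesis by (simp only: cong_add_rcancel_nat)
qed

lemma nat_cong_pd:
  assumes "prime p" "[x = y] (mod p ^ r)"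
  shows "pd p r (of_nat x - of_nat y)"
proof -
  have "[int x = int y] (mod int (p ^ r))" using assms(2) by (simp only: cong_int_iff)
  then have "int p ^ r dvd int x - int y" by (simp add: cong_iff_dvd_diff)
  then show ?thesis using pd_int[OF assms(1), of r "int x - int y"] by simp
qed

lemma kummer:
  assumes p: "prime p" "p \<ge> 5" and r: "r \<ge> 1"
    and k: "k \<ge> 2" "even k" "\<not> p dvd k" "r \<le> k - 1"
    and k': "k' \<ge> 2" "even k'" "\<not> p dvd k'" "r \<le> k' - 1"
    and cg: "[k = k'] (mod totient (p ^ r))" and nd: "\<not> (p - 1) dvd k"
  shows "pd p r (bernoulli k / of_nat k - bernoulli k' / of_nat k')"
proof -
  obtain a where a: "a \<in> totatives p" "ord p a = p - 1" using residue_prime_has_primroot[OF p(1)] by blast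
  have cop: "coprime a p" using a(1) by (simp add: totatives_def)
  have copN: "coprime a (p ^ r)" using cop by simp
  have na: "\<not> [a ^ k = 1] (mod p)" using nd a(2) ord_divides'[of a k p] by simp
  have c1: "[a ^ k = a ^ k'] (mod p ^ r)" by (rule pow_cong_tot[OF copN cg])
  have cg1: "[k - 1 = k' - 1] (mod totient (p ^ r))" using cg k k' by (intro cong_pred) auto
  have c2: "[a ^ (k - 1) = a ^ (k' - 1)] (mod p ^ r)" by (rule pow_cong_tot[OF copN cg1])
  have cT: "[vT (p ^ r) a k = vT (p ^ r) a k'] (mod int (p ^ r))"
    unfolding vT_def
  proof (rule cong_sum, rule cong_mult)
    fix j
    have "[j ^ (k - 1) = j ^ (k' - 1)] (mod p ^ r)" by (rule pow_cong_j[OF p(1) cg1 k(4) k'(4)])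
    then show "[int j ^ (k - 1) = int j ^ (k' - 1)] (mod int (p ^ r))"
      by (metis cong_int_iff of_nat_power)
  qed (rule cong_refl)
  have c3: "[int a ^ (k - 1) * vT (p ^ r) a k = int a ^ (k' - 1) * vT (p ^ r) a k'] (mod int (p ^ r))"
    using c2 cT by (metis cong_int_iff cong_mult of_nat_power)
  define X where "X = bernoulli k / of_nat k"
  define X' where "X' = bernoulli k' / of_nat k'"
  define C where "C = (of_nat a ^ (k - 1) * of_int (vT (p ^ r) a k) :: rat)"
  define C' where "C' = (of_nat a ^ (k' - 1) * of_int (vT (p ^ r) a k') :: rat)"
  have V: "pd p r ((of_nat a ^ k - 1) * X - C)" unfolding X_def C_def
    by (rule voronoi[OF p r cop k(1,2,3)])
  have V': "pd p r ((of_nat a ^ k' - 1) * X' - C')" unfolding X'_def C'_def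
    by (rule voronoi[OF p r cop k'(1,2,3)])
  have CC: "pd p r (C - C')"
  proof -
    have "int p ^ r dvd int a ^ (k - 1) * vT (p ^ r) a k - int a ^ (k' - 1) * vT (p ^ r) a k'"
      using c3 by (simp add: cong_iff_dvd_diff)
    then show ?thesis unfolding C_def C'_def using pd_int[OF p(1), of r] by fastforce
  qed
  have AA: "pd p r (of_nat a ^ k - of_nat a ^ k')"
    using nat_cong_pd[OF p(1) c1] by simp
  have unit_of: "punit p (of_nat a ^ j - 1)" if "\<not> [a ^ j = 1] (mod p)" for j
  proof -
    have "\<not> int p dvd int a ^ j - 1"
    proof
      assume "int p dvd int a ^ j - 1"
      then have "[int (a ^ j) = int 1] (mod int p)" by (simp add: cong_iff_dvd_diff)
      then show False using that by (simp only: cong_int_iff)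
    qed
    then show ?thesis using punit_int[of p "int a ^ j - 1"] p by simp
  qed
  have uk: "punit p (of_nat a ^ k - 1)" using unit_of na by blast
  have na': "\<not> [a ^ k' = 1] (mod p)"
  proof
    assume "[a ^ k' = 1] (mod p)"
    moreover have "[a ^ k = a ^ k'] (mod p)"
    proof (rule cong_dvd_modulus_nat[OF c1])
      show "p dvd p ^ r" using r by (simp add: dvd_power)
    qed
    ultimately show False using na cong_trans by blast
  qed
  have uk': "punit p (of_nat a ^ k' - 1)" using unit_of na' by blast
  have X'0: "pd p 0 X'"
  proof -
    have "pd p 0 (of_nat (a ^ (k' - 1)) * of_int (vT (p ^ r) a k'))"
      using pd_int[OF p(1), of 0 "int (a ^ (k' - 1)) * vT (p ^ r) a k'"] by simp
    then have "pd p 0 C'" unfolding C'_def by simp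
    moreover have "pd p 0 ((of_nat a ^ k' - 1) * X' - C')" using pd_mono[OF V'] by simp
    ultimately have "pd p 0 ((of_nat a ^ k' - 1) * X')" using pd_add_cancel[OF p(1)] by blast
    then show ?thesis by (rule pd_cancel_unit[OF p(1) _ uk'])
  qed
  have "pd p r ((of_nat a ^ k - of_nat a ^ k') * X')"
    using pd_mult[OF p(1) AA X'0] by simp
  then have "pd p r ((((of_nat a ^ k - 1) * X - C) - ((of_nat a ^ k' - 1) * X' - C')) + (C - C') - (of_nat a ^ k - of_nat a ^ k') * X')"
    by (intro pd_diff[OF p(1)] pd_add[OF p(1)] V V' CC)
  moreover have "(((of_nat a ^ k - 1) * X - C) - ((of_nat a ^ k' - 1) * X' - C')) + (C - C') - (of_nat a ^ k - of_nat a ^ k') * X'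
      = (of_nat a ^ k - 1) * (X - X')"
    by (simp add: algebra_simps)
  ultimately have "pd p r ((of_nat a ^ k - 1) * (X - X'))" by simp
  then have "pd p r (X - X')" by (rule pd_cancel_unit[OF p(1) _ uk])
  then show ?thesis unfolding X_def X'_def .
qed

lemma kummer_dvd:
  assumes p: "prime p" "p \<ge> 5" and r: "r \<ge> 1"
    and k: "k \<ge> 2" "even k" "\<not> p dvd k" "r \<le> k - 1"
    and k': "k' \<ge> 2" "even k'" "\<not> p dvd k'" "r \<le> k' - 1"
    and cg: "[k = k'] (mod totient (p ^ r))" and nd: "\<not> (p - 1) dvd k"
    and h: "int p ^ r dvd num (bernoulli k / of_nat k)"
  shows "int p ^ r dvd num (bernoulli k' / of_nat k')"
proof -
  have K: "pd p r (bernoulli k / of_nat k - bernoulli k' / of_nat k')" by (rule kummer[OF assms(1-13)])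
  have "pd p r (bernoulli k / of_nat k)" using h pd_num_iff[OF p(1) r] by simp
  then have "pd p r (bernoulli k / of_nat k - (bernoulli k / of_nat k - bernoulli k' / of_nat k'))"
    by (rule pd_diff[OF p(1) _ K])
  then have "pd p r (bernoulli k' / of_nat k')" by simp
  then show ?thesis using pd_num_iff[OF p(1) r] by simp
qed

lemma num_zero_iff: "num x = 0 \<longleftrightarrow> x = 0"
proof
  assume "num x = 0" then show "x = 0" using num_den(1)[of x] by simp
next
  assume "x = 0" then show "num x = 0" by (simp add: num_def)
qed

lemma num_div_int:
  assumes "c > 0" "num x \<noteq> 0"
  shows "of_int (num x) / of_int (num (x / of_int c)) = (of_int (gcd (num x) c) :: rat)"
proof -
  define a where "a = num x"
  define b where "b = den x"
  define g where "g = gcd a c"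
  have b0: "b > 0" and cop: "coprime a b" and xe: "x = of_int a / of_int b"
    using num_den[of x] unfolding a_def b_def by auto
  have g0: "g > 0" using assms(1) unfolding g_def by simp
  define a' where "a' = a div g"
  define c' where "c' = c div g"
  have aa: "a = g * a'" unfolding a'_def g_def by simp
  have cc: "c = g * c'" unfolding c'_def g_def by simp
  have c'0: "c' > 0" using assms(1) g0 cc by (simp add: zero_less_mult_iff)
  have cop1: "coprime a' c'" unfolding a'_def c'_def g_def using assms(1) by (intro div_gcd_coprime) simp
  have cop2: "coprime a' b" using cop aa by (metis coprime_mult_left_iff)
  have cop3: "coprime a' (b * c')" using cop1 cop2 by simp
  have "x / of_int c = of_int a' / of_int (b * c')"
    using g0 b0 c'0 unfolding xe aa cc by (simp add: field_simps)
  then have "num (x / of_int c) = a'" using num_den_unique(1)[OF _ cop3] b0 c'0 by simp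
  moreover have "a' \<noteq> 0" using assms(2) aa unfolding a_def by auto
  moreover have "(of_int a :: rat) = of_int g * of_int a'" using aa by simp
  ultimately show ?thesis unfolding a_def[symmetric] g_def by simp
qed

lemma Q_eq:
  assumes "m \<ge> 2"
  shows "Q m = (if num (bernoulli m / of_nat m) = 0 then 0
                else of_int (gcd (num (bernoulli m / of_nat m)) (int m - 1)))"
proof -
  define x where "x = bernoulli m / of_nat m"
  have e: "bernoulli m / (of_nat m * (of_nat m - 1)) = x / of_int (int m - 1)"
    unfolding x_def using assms by (simp add: field_simps)
  show ?thesis
  proof (cases "num x = 0")
    case True
    then have "x = 0" by (simp add: num_zero_iff)
    then show ?thesis unfolding Q_def e by (simp add: x_def[symmetric] num_def)
  next
    case False
    have "int m - 1 > 0" using assms by simp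
    from num_div_int[OF this False] False show ?thesis
      unfolding Q_def e by (simp add: x_def[symmetric])
  qed
qed

lemma coprime_iff_primes:
  fixes a :: int and c :: nat
  assumes "c > 0"
  shows "coprime a (int c) \<longleftrightarrow> (\<forall>q. prime q \<longrightarrow> q dvd c \<longrightarrow> \<not> int q dvd a)"
proof
  assume cp: "coprime a (int c)"
  show "\<forall>q. prime q \<longrightarrow> q dvd c \<longrightarrow> \<not> int q dvd a"
  proof (intro allI impI notI)
    fix q :: nat assume q: "prime q" "q dvd c" "int q dvd a"
    have "int q dvd int c" using q(2) by simp
    then have "is_unit (int q)" using cp q(3) coprime_common_divisor by blast
    then show False using q(1) by simp
  qed
next
  assume h: "\<forall>q. prime q \<longrightarrow> q dvd c \<longrightarrow> \<not> int q dvd a"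
  show "coprime a (int c)"
  proof (rule ccontr)
    assume nc: "\<not> coprime a (int c)"
    define g where "g = gcd a (int c)"
    have "g \<noteq> 1" using nc unfolding g_def by (simp add: coprime_iff_gcd_eq_1)
    moreover have "g \<ge> 0" unfolding g_def by simp
    ultimately have "\<bar>g\<bar> \<noteq> 1" by simp
    then obtain q' where q': "prime q'" "q' dvd g" by (rule prime_factor_int)
    have q'0: "q' \<ge> 0" using q'(1) prime_ge_0_int by blast
    define q where "q = nat q'"
    have qq: "q' = int q" unfolding q_def using q'0 by simp
    have "prime q" using q'(1) qq by simp
    moreover have "q dvd c" using q'(2) qq unfolding g_def by (metis dvd_trans gcd_dvd2 int_dvd_int_iff)
    moreover have "int q dvd a" using q'(2) qq unfolding g_def by (metis dvd_trans gcd_dvd1)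
    ultimately show False using h by blast
  qed
qed

lemma lsum_1: "lsum p s (Suc 0) = s (Suc 0)"
  unfolding lsum_def by simp

lemma lsum_Suc: "n \<ge> 1 \<Longrightarrow> lsum p s (Suc n) = lsum p s n + s (Suc n) * totient (p ^ n)"
  unfolding lsum_def by (simp add: sum.cl_ivl_Suc)

lemma lsum_ge: "n \<ge> 1 \<Longrightarrow> lsum p s n \<ge> s 1"
proof (induction n rule: dec_induct)
  case base then show ?case by (simp add: lsum_1)
next
  case (step n) then show ?case using lsum_Suc[of n p s] by simp
qed

lemma lsum_digits:
  assumes "prime p" "s 1 = l" "l \<ge> 1" "l < p" "\<forall>\<nu>\<in>{1..r}. s \<nu> < p" "\<forall>\<nu>\<in>{2..r}. s \<nu> = l - 1" "1 \<le> n" "n \<le> r"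
  shows "lsum p s n = (l - 1) * p ^ (n - 1) + 1"
  using assms(7,8)
proof (induction n rule: dec_induct)
  case base then show ?case using assms(2,3) by (simp add: lsum_1)
next
  case (step n)
  have "s (Suc n) = l - 1" using assms(6) step by auto
  moreover have "totient (p ^ n) = p ^ (n - 1) * (p - 1)" using assms(1) step by (simp add: totient_prime_power)
  ultimately have "lsum p s (Suc n) = (l - 1) * p ^ (n - 1) + 1 + (l - 1) * (p ^ (n - 1) * (p - 1))"
    using lsum_Suc[of n p s] step by simp
  also have "\<dots> = (l - 1) * (p ^ (n - 1) * (1 + (p - 1))) + 1" by (simp add: algebra_simps)
  also have "\<dots> = (l - 1) * p ^ n + 1"
  proof -
    have "1 + (p - 1) = p" using assms(4) by simp
    moreover have "p ^ (n - 1) * p = p ^ n" using step(1) by (cases n) auto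
    ultimately show ?thesis by simp
  qed
  finally show ?case by simp
qed

lemma lsum_forced:
  assumes "prime p" "s 1 = l" "l \<ge> 1" "l < p" "\<forall>\<nu>\<in>{1..r}. s \<nu> < p" "1 \<le> n" "n \<le> r"
    "int p ^ (n - 1) dvd int (lsum p s n) - 1"
  shows "(\<forall>\<nu>\<in>{2..n}. s \<nu> = l - 1) \<and> lsum p s n = (l - 1) * p ^ (n - 1) + 1"
  using assms(6,7,8)
proof (induction n rule: dec_induct)
  case base then show ?case using assms(2,3) by (simp add: lsum_1)
next
  case (step n)
  define t where "t = s (Suc n)"
  have tp: "t < p" using assms(5) step unfolding t_def by auto
  have tot: "totient (p ^ n) = p ^ (n - 1) * (p - 1)" using assms(1) step by (simp add: totient_prime_power)
  have "lsum p s (Suc n) = lsum p s n + t * (p ^ (n - 1) * (p - 1))"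
    using lsum_Suc[OF step(1), of p s] tot unfolding t_def by simp
  then have "int (lsum p s (Suc n)) = int (lsum p s n) + int t * (int p ^ (n - 1) * int (p - 1))"
    by simp
  moreover have "int (p - 1) = int p - 1" using prime_gt_0_nat[OF assms(1)] by simp
  ultimately have eqS: "int (lsum p s (Suc n)) = int (lsum p s n) + int t * int p ^ (n - 1) * (int p - 1)"
    by (simp add: mult.assoc)
  have pn: "int p ^ n = int p ^ (n - 1) * int p" using step(1) by (cases n) auto
  have d1: "int p ^ (n - 1) dvd int (lsum p s (Suc n)) - 1"
    using step(5) pn by (metis diff_Suc_1 dvd_mult_left)
  have "int p ^ (n - 1) dvd int (lsum p s n) - 1"
  proof -
    have "int (lsum p s n) - 1 = (int (lsum p s (Suc n)) - 1) - int t * int p ^ (n - 1) * (int p - 1)"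
      using eqS by simp
    moreover have "int p ^ (n - 1) dvd int t * int p ^ (n - 1) * (int p - 1)" by simp
    ultimately show ?thesis using d1 by (metis dvd_diff)
  qed
  then have IH: "(\<forall>\<nu>\<in>{2..n}. s \<nu> = l - 1) \<and> lsum p s n = (l - 1) * p ^ (n - 1) + 1"
    using step by simp
  have e2: "int (lsum p s (Suc n)) - 1 = int p ^ (n - 1) * ((int l - 1 - int t) + int t * int p)"
    using eqS IH assms(3) by (simp add: algebra_simps of_nat_diff)
  have "int p ^ (n - 1) * int p dvd int p ^ (n - 1) * ((int l - 1 - int t) + int t * int p)"
    using step(5) e2 pn by (metis diff_Suc_1)
  then have "int p dvd (int l - 1 - int t) + int t * int p"
    using assms(1) prime_gt_0_nat[of p] by (subst (asm) dvd_mult_cancel_left) auto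
  then have dv: "int p dvd int l - 1 - int t" by (metis dvd_add_times_triv_right_iff)
  have "int l - 1 - int t = 0"
  proof (rule ccontr)
    assume nz: "int l - 1 - int t \<noteq> 0"
    have "\<bar>int l - 1 - int t\<bar> < int p" using assms(3,4) tp by linarith
    moreover have "int p \<le> \<bar>int l - 1 - int t\<bar>"
    proof -
      have "\<bar>int p\<bar> \<le> \<bar>int l - 1 - int t\<bar>" by (rule dvd_imp_le_int[OF nz dv])
      then show ?thesis by simp
    qed
    ultimately show False by simp
  qed
  then have tl: "t = l - 1" by simp
  have "lsum p s (Suc n) = (l - 1) * p ^ n + 1"
  proof -
    have "int (lsum p s (Suc n)) - 1 = int p ^ (n - 1) * (int t * int p)"
      using e2 \<open>int l - 1 - int t = 0\<close> by simp
    also have "\<dots> = int (l - 1) * (int p ^ (n - 1) * int p)" using tl by (simp add: algebra_simps)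
    also have "\<dots> = int ((l - 1) * p ^ n)" using pn by simp
    finally have "int (lsum p s (Suc n)) = int ((l - 1) * p ^ n + 1)" by simp
    then show ?thesis by (simp only: of_nat_eq_iff)
  qed
  moreover have "\<forall>\<nu>\<in>{2..Suc n}. s \<nu> = l - 1"
    using IH tl unfolding t_def by (auto simp: le_Suc_eq)
  ultimately show ?case by simp
qed

lemma gcd_piece:
  fixes a :: int and c p r :: nat
  assumes "prime p" "int p ^ r dvd a" "c > 0" "c < p"
  shows "gcd a (int c * int p ^ r) = int p ^ r \<longleftrightarrow> (\<forall>q. prime q \<longrightarrow> q dvd c \<longrightarrow> \<not> int q dvd a)"
proof -
  define P where "P = int p ^ r"
  have P0: "P > 0" unfolding P_def using prime_gt_0_nat[OF assms(1)] by simp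
  obtain a' where a': "a = P * a'" using assms(2) unfolding P_def by (auto elim!: dvdE)
  have "gcd a (int c * P) = P * gcd a' (int c)"
    unfolding a' using P0 by (simp add: gcd_mult_left mult.commute[of "int c"] abs_mult)
  then have "gcd a (int c * P) = P \<longleftrightarrow> gcd a' (int c) = 1" using P0 by simp
  also have "\<dots> \<longleftrightarrow> coprime a' (int c)" by (simp add: coprime_iff_gcd_eq_1)
  also have "\<dots> \<longleftrightarrow> (\<forall>q. prime q \<longrightarrow> q dvd c \<longrightarrow> \<not> int q dvd a')" by (rule coprime_iff_primes[OF assms(3)])
  also have "\<dots> \<longleftrightarrow> (\<forall>q. prime q \<longrightarrow> q dvd c \<longrightarrow> \<not> int q dvd a)"
  proof -
    have "int q dvd a \<longleftrightarrow> int q dvd a'" if q: "prime q" "q dvd c" for q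
    proof -
      have "q \<le> c" using q(2) assms(3) by (simp add: dvd_imp_le)
      then have "q \<noteq> p" using assms(4) by simp
      then have "coprime (int q) (int p)" using q(1) assms(1) by (simp add: primes_coprime)
      then have "coprime (int q) P" unfolding P_def by simp
      then show ?thesis unfolding a' by (rule coprime_dvd_mult_right_iff)
    qed
    then show ?thesis by blast
  qed
  finally show ?thesis unfolding P_def .
qed

lemma q_lemma:
  fixes p l r q :: nat
  assumes p: "prime p" "odd p" and l: "even l" "2 \<le> l" and r: "r \<ge> 1"
    and M: "M = (l - 1) * p ^ r + 1"
    and q: "prime q" "q dvd (l - 1)"
  shows "int q dvd num (bernoulli M / of_nat M) \<longleftrightarrow>
         (\<exists>l'. irregular_pair q l' \<and> [(l - 1) * p ^ r = l' - 1] (mod (q - 1)))"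
proof -
  have oddl1: "odd (l - 1)" using l by simp
  have qodd: "odd q"
  proof
    assume "even q"
    then have "2 dvd l - 1" using q(2) dvd_trans by blast
    then show False using oddl1 by simp
  qed
  have q3: "q \<ge> 3" using q(1) qodd prime_ge_2_nat[of q] by (cases "q = 2") auto
  have oddM1: "odd ((l - 1) * p ^ r)" using oddl1 p(2) by simp
  have Meven: "even M" using oddM1 M by simp
  have M2: "M \<ge> 2" using M l p prime_gt_0_nat[of p] by simp
  have qM1: "q dvd (l - 1) * p ^ r" using q(2) by simp
  have nqM: "\<not> q dvd M"
  proof
    assume "q dvd M"
    then have "q dvd (l - 1) * p ^ r + 1" using M by simp
    then have "q dvd 1" using dvd_add_right_iff[OF qM1, of 1] by blast
    then show False using q(1) by simp
  qed
  show ?thesis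
  proof
    assume h: "int q dvd num (bernoulli M / of_nat M)"
    have ndq: "\<not> (q - 1) dvd M"
      using vSC[OF q(1) qodd _] M2 h by auto
    have "q \<noteq> 3" using ndq Meven by auto
    then have q5: "q \<ge> 5" using q3 qodd by (cases "q = 4") auto
    define t where "t = M mod (q - 1)"
    have tlt: "t < q - 1" unfolding t_def using q3 by simp
    have t0: "t \<noteq> 0" using ndq unfolding t_def by (simp add: dvd_eq_mod_eq_0)
    have teven: "even t" unfolding t_def using Meven qodd q3 by (intro dvd_mod) auto
    have t2: "t \<ge> 2"
    proof (rule ccontr)
      assume "\<not> t \<ge> 2"
      then have "t = 1" using t0 by simp
      then show False using teven by simp
    qed
    have t3: "t + 3 \<le> q"
    proof -
      have "t \<noteq> q - 2" using teven qodd q3 by (auto simp: even_diff_nat)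
      then show ?thesis using tlt by simp
    qed
    have nqt: "\<not> q dvd t" using t0 tlt by (auto dest: dvd_imp_le)
    have cg: "[M = t] (mod totient (q ^ 1))" using q(1) unfolding t_def by (simp add: totient_prime cong_def)
    have "int q ^ 1 dvd num (bernoulli t / of_nat t)"
      by (rule kummer_dvd[OF q(1) q5 _ M2 Meven nqM _ t2 teven nqt _ cg ndq]) (use h M2 t2 in auto)
    then have "pd q 1 (bernoulli t / of_nat t)" using pd_num_iff[OF q(1), of 1] by simp
    then have "pd q 1 (of_nat t * (bernoulli t / of_nat t))" by (rule pd_mult_nat[OF q(1)])
    then have "pd q 1 (bernoulli t)" using t0 by simp
    then have "int q dvd num (bernoulli t)" using pd_num_iff[OF q(1), of 1] by simp
    then have irr: "irregular_pair q t" unfolding irregular_pair_def using q(1) qodd teven t2 t3 by simp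
    have "[(l - 1) * p ^ r + 1 = (t - 1) + 1] (mod (q - 1))"
      using t2 unfolding t_def M[symmetric] by (simp add: cong_def)
    then have "[(l - 1) * p ^ r = t - 1] (mod (q - 1))" by (simp only: cong_add_rcancel_nat)
    then show "\<exists>l'. irregular_pair q l' \<and> [(l - 1) * p ^ r = l' - 1] (mod (q - 1))" using irr by blast
  next
    assume "\<exists>l'. irregular_pair q l' \<and> [(l - 1) * p ^ r = l' - 1] (mod (q - 1))"
    then obtain l' where irr: "irregular_pair q l'" and cg0: "[(l - 1) * p ^ r = l' - 1] (mod (q - 1))" by blast
    have l': "even l'" "2 \<le> l'" "l' + 3 \<le> q" "int q dvd num (bernoulli l')"
      using irr unfolding irregular_pair_def by auto
    have q5: "q \<ge> 5" using l' by simp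
    have "[(l - 1) * p ^ r + 1 = (l' - 1) + 1] (mod (q - 1))" using cg0 by (rule cong_add) simp
    then have cgM: "[M = l'] (mod (q - 1))" using l'(2) M by simp
    have lmod: "l' mod (q - 1) = l'" using l'(3) by simp
    have ndl: "\<not> (q - 1) dvd l'" using l' by (auto dest: dvd_imp_le)
    have nql: "\<not> q dvd l'" using l' by (auto dest: dvd_imp_le)
    have "pd q 1 (bernoulli l')" using l'(4) pd_num_iff[OF q(1), of 1] by simp
    moreover have "punit q (of_nat l')" using punit_int[of q "int l'"] nql q5 by simp
    ultimately have "pd q 1 (bernoulli l' / of_nat l')" by (rule pd_divide[OF q(1)])
    then have hl: "int q ^ 1 dvd num (bernoulli l' / of_nat l')" using pd_num_iff[OF q(1), of 1] by simp
    have cg: "[l' = M] (mod totient (q ^ 1))" using cgM q(1) by (simp add: totient_prime cong_sym)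
    have "int q ^ 1 dvd num (bernoulli M / of_nat M)"
      by (rule kummer_dvd[OF q(1) q5 _ l'(2) l'(1) nql _ M2 Meven nqM _ cg ndl hl]) (use l'(2) M2 in auto)
    then show "int q dvd num (bernoulli M / of_nat M)" by simp
  qed
qed

lemma tot_dvd: "prime p \<Longrightarrow> n \<ge> 1 \<Longrightarrow> (p - 1) dvd totient (p ^ n)"
  by (simp add: totient_prime_power)

lemma lsum_mod:
  assumes "prime p" "n \<ge> 1"
  shows "[lsum p s n = s 1] (mod (p - 1))"
  using assms(2)
proof (induction n rule: dec_induct)
  case base then show ?case by (simp add: lsum_1)
next
  case (step n)
  have "(p - 1) dvd s (Suc n) * totient (p ^ n)" using tot_dvd[OF assms(1) step(1)] by simp
  then have "[lsum p s n + s (Suc n) * totient (p ^ n) = s 1 + 0] (mod (p - 1))"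
    using step(3) by (intro cong_add) (auto simp: cong_0_iff)
  then show ?case using lsum_Suc[OF step(1), of p s] by simp
qed

lemma r_le_pow: "r \<ge> 1 \<Longrightarrow> p \<ge> 2 \<Longrightarrow> r \<le> p ^ (r - 1)"
proof -
  assume "r \<ge> 1" "p \<ge> 2"
  obtain r' where r': "r = Suc r'" using \<open>r \<ge> 1\<close> by (cases r) auto
  have "r' < 2 ^ r'" by simp
  then have "r \<le> 2 ^ (r - 1)" unfolding r' by (simp add: Suc_le_eq)
  also have "(2::nat) ^ (r - 1) \<le> p ^ (r - 1)" using \<open>p \<ge> 2\<close> by (simp add: power_mono)
  finally show ?thesis .
qed

lemma lower_bound:
  fixes p l r L m k :: nat
  assumes p: "prime p" and l: "2 \<le> l" "l + 3 \<le> p"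
    and L: "[L = l] (mod (p - 1))" and tot: "(p - 1) dvd t0"
    and m: "m = L + k * t0" "m \<ge> 1" and d: "p ^ r dvd m - 1"
  shows "(l - 1) * p ^ r + 1 \<le> m"
proof -
  obtain t where t: "m - 1 = p ^ r * t" using d by (auto elim!: dvdE)
  have m1: "m = p ^ r * t + 1" using t m(2) by simp
  have c1: "[m = l] (mod (p - 1))"
  proof -
    have "[L + k * t0 = l + 0] (mod (p - 1))" using L tot by (intro cong_add) (auto simp: cong_0_iff)
    then show ?thesis using m(1) by simp
  qed
  have pc: "[p = 1] (mod (p - 1))"
  proof -
    have "p = (p - 1) + 1" using l by simp
    then show ?thesis by (metis cong_add_rcancel_nat cong_refl mod_self cong_def add.left_neutral mod_0)
  qed
  have "[p ^ r * t + 1 = 1 ^ r * t + 1] (mod (p - 1))"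
    by (intro cong_add cong_mult cong_pow pc cong_refl)
  then have "[t + 1 = (l - 1) + 1] (mod (p - 1))" using c1 m1 l(1)
    by (metis (no_types, lifting) cong_sym cong_trans le_add_diff_inverse2 mult_1 one_le_numeral order.trans power_one)
  then have "[t = l - 1] (mod (p - 1))" by (simp only: cong_add_rcancel_nat)
  then have "t mod (p - 1) = l - 1" using l unfolding cong_def by simp
  then have "l - 1 \<le> t" by (metis mod_less_eq_dividend)
  then have "(l - 1) * p ^ r \<le> t * p ^ r" by simp
  then show ?thesis using m1 by (simp add: mult.commute)
qed

lemma memA:
  fixes p r L m :: nat
  assumes "prime p" "L \<ge> 2"
  shows "m \<in> A_set p r L \<longleftrightarrow> (\<exists>k. m = L + k * totient (p ^ r)) \<and>
      num (bernoulli m / of_nat m) \<noteq> 0 \<and> gcd (num (bernoulli m / of_nat m)) (int m - 1) = int p ^ r"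
proof -
  have "Q m = of_nat (p ^ r) \<longleftrightarrow> num (bernoulli m / of_nat m) \<noteq> 0 \<and> gcd (num (bernoulli m / of_nat m)) (int m - 1) = int p ^ r"
    if "m \<ge> 2"
  proof -
    have pr0: "(of_nat (p ^ r) :: rat) \<noteq> 0" using prime_gt_0_nat[OF assms(1)] by simp
    show ?thesis
    proof (cases "num (bernoulli m / of_nat m) = 0")
      case True then show ?thesis using Q_eq[OF that] pr0 by simp
    next
      case False
      have "(of_int (gcd (num (bernoulli m / of_nat m)) (int m - 1)) = (of_nat (p ^ r) :: rat))
         \<longleftrightarrow> gcd (num (bernoulli m / of_nat m)) (int m - 1) = int (p ^ r)"
        by (metis of_int_eq_iff of_int_of_nat_eq)
      then show ?thesis using Q_eq[OF that] False by simp
    qed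
  qed
  moreover have "m = L + k * totient (p ^ r) \<Longrightarrow> m \<ge> 2" for k using assms(2) by simp
  ultimately show ?thesis unfolding A_set_def by blast
qed

theorem theorem3p3:
  fixes p l r :: nat and s :: "nat \<Rightarrow> nat"
  assumes r: "r \<ge> 1"
    and irr: "irregular_pair p l"
    and Delta: "Delta p l \<noteq> 0"
    and s1: "s 1 = l"
    and digits: "\<forall>\<nu>\<in>{1..r}. s \<nu> < p"
    and order: "\<forall>n\<in>{1..r}. (p, lsum p s n) \<in> psi_irr n"
  shows
    "(A_set p r (lsum p s r) \<noteq> {} \<longrightarrow>
        (\<forall>\<nu>\<in>{2..r}. s \<nu> = l - 1) \<and> lsum p s r - 1 = (l - 1) * p ^ (r - 1))
     \<and> (\<forall>m\<in>A_set p r (lsum p s r). (l - 1) * p ^ r + 1 \<le> m)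
     \<and> ((\<forall>\<nu>\<in>{2..r}. s \<nu> = l - 1) \<longrightarrow>
        ((A_set p r (lsum p s r) \<noteq> {}
          \<and> A p r (lsum p s r) = (lsum p s r - 1) * p + 1
          \<and> A p r (lsum p s r) = (l - 1) * p ^ r + 1)
         \<longleftrightarrow>
         ((\<not> (\<exists>q. prime q \<and> q dvd (l - 1) \<and> irregular_prime q))
          \<or> (\<forall>q. prime q \<and> q dvd (l - 1) \<and> irregular_prime q \<longrightarrow>
               (\<forall>l'. irregular_pair q l' \<longrightarrow>
                  \<not> [(l - 1) * p ^ r = l' - 1] (mod (q - 1)))))))"
proof -
  have p: "prime p" "odd p" and l: "even l" "2 \<le> l" "l + 3 \<le> p"
    using irr unfolding irregular_pair_def by auto
  have p5: "p \<ge> 5" using l by simp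
  have s1': "s (Suc 0) = l" using s1 by simp
  define L where "L = lsum p s r"
  define tot where "tot = totient (p ^ r)"
  have totv: "tot = p ^ (r - 1) * (p - 1)" unfolding tot_def using p(1) r by (simp add: totient_prime_power)
  have Lge: "L \<ge> l" unfolding L_def using lsum_ge[OF r, where p=p and s=s] s1 by simp
  have L2: "L \<ge> 2" using Lge l by simp
  have Lmod: "[L = l] (mod (p - 1))" unfolding L_def using lsum_mod[OF p(1) r, of s] s1 by simp
  have ptot: "(p - 1) dvd tot" unfolding totv by simp
  have mem: "m \<in> A_set p r L \<longleftrightarrow> (\<exists>k. m = L + k * tot) \<and>
      num (bernoulli m / of_nat m) \<noteq> 0 \<and> gcd (num (bernoulli m / of_nat m)) (int m - 1) = int p ^ r" for m
    unfolding tot_def by (rule memA[OF p(1) L2])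
  have dvd_of_mem: "(\<exists>k. m = L + k * tot) \<and> p ^ r dvd m - 1" if "m \<in> A_set p r L" for m
  proof -
    have hh: "(\<exists>k. m = L + k * tot) \<and>
      num (bernoulli m / of_nat m) \<noteq> 0 \<and> gcd (num (bernoulli m / of_nat m)) (int m - 1) = int p ^ r"
      using iffD1[OF mem[of m] that] .
    then obtain k where k: "m = L + k * tot" by blast
    have g: "gcd (num (bernoulli m / of_nat m)) (int m - 1) = int p ^ r" using hh by blast
    have m2: "m \<ge> 2" using k L2 by simp
    have gd: "gcd (num (bernoulli m / of_nat m)) (int m - 1) dvd int m - 1" by (rule gcd_dvd2)
    have e1: "int m - 1 = int (m - 1)" using m2 by simp
    have e2: "int p ^ r = int (p ^ r)" by simp
    have "int (p ^ r) dvd int (m - 1)" using gd unfolding g unfolding e1 e2 .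
    then have "p ^ r dvd m - 1" by (simp only: int_dvd_int_iff)
    then show ?thesis using k by blast
  qed
  have part2: "\<forall>m\<in>A_set p r L. (l - 1) * p ^ r + 1 \<le> m"
  proof
    fix m assume "m \<in> A_set p r L"
    then obtain k where k: "m = L + k * tot" and d: "p ^ r dvd m - 1" using dvd_of_mem by blast
    have "m \<ge> 1" using k L2 by simp
    show "(l - 1) * p ^ r + 1 \<le> m" by (rule lower_bound[OF p(1) l(2,3) Lmod ptot k \<open>m \<ge> 1\<close> d])
  qed
  have part1: "A_set p r L \<noteq> {} \<longrightarrow> (\<forall>\<nu>\<in>{2..r}. s \<nu> = l - 1) \<and> L - 1 = (l - 1) * p ^ (r - 1)"
  proof
    assume "A_set p r L \<noteq> {}"
    then obtain m where "m \<in> A_set p r L" by blast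
    then obtain k where k: "m = L + k * tot" and d: "p ^ r dvd m - 1" using dvd_of_mem by blast
    have pr: "int p ^ (r - 1) dvd int p ^ r" using r by (simp add: le_imp_power_dvd)
    have "int (p ^ r) dvd int (m - 1)" using d by (simp only: int_dvd_int_iff)
    then have "int p ^ r dvd int (m - 1)" by simp
    then have d1: "int p ^ (r - 1) dvd int (m - 1)" using pr dvd_trans by blast
    have d2: "int p ^ (r - 1) dvd int k * int tot" unfolding totv by simp
    have "int L - 1 = int (m - 1) - int k * int tot" using k L2 by simp
    moreover have "int p ^ (r - 1) dvd int (m - 1) - int k * int tot" by (rule dvd_diff[OF d1 d2])
    ultimately have "int p ^ (r - 1) dvd int L - 1" by simp
    then have "(\<forall>\<nu>\<in>{2..r}. s \<nu> = l - 1) \<and> lsum p s r = (l - 1) * p ^ (r - 1) + 1"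
      unfolding L_def using l p5 by (intro lsum_forced[OF p(1) s1 _ _ digits r]) auto
    then show "(\<forall>\<nu>\<in>{2..r}. s \<nu> = l - 1) \<and> L - 1 = (l - 1) * p ^ (r - 1)" unfolding L_def by simp
  qed
  have part3: "((A_set p r L \<noteq> {} \<and> A p r L = (L - 1) * p + 1 \<and> A p r L = (l - 1) * p ^ r + 1)
         \<longleftrightarrow>
         ((\<not> (\<exists>q. prime q \<and> q dvd (l - 1) \<and> irregular_prime q))
          \<or> (\<forall>q. prime q \<and> q dvd (l - 1) \<and> irregular_prime q \<longrightarrow>
               (\<forall>l'. irregular_pair q l' \<longrightarrow>
                  \<not> [(l - 1) * p ^ r = l' - 1] (mod (q - 1))))))"
    if D: "\<forall>\<nu>\<in>{2..r}. s \<nu> = l - 1"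
  proof -
    have Lv: "L = (l - 1) * p ^ (r - 1) + 1" unfolding L_def using l p5
      by (intro lsum_digits[OF p(1) s1 _ _ digits D r]) auto
    define M where "M = (l - 1) * p ^ r + 1"
    have prr: "p ^ (r - 1) * p = p ^ r" using r by (cases r) auto
    have LM: "(L - 1) * p + 1 = M" unfolding M_def Lv using prr by (simp add: mult.assoc)
    have MeqL: "M = L + (l - 1) * tot"
    proof -
      have "L + (l - 1) * tot = (l - 1) * (p ^ (r - 1) * (1 + (p - 1))) + 1"
        unfolding Lv totv by (simp add: algebra_simps)
      also have "\<dots> = M" unfolding M_def using prr p5 by simp
      finally show ?thesis by simp
    qed
    have M2: "M \<ge> 2" unfolding M_def using l p5 by simp
    have oddl1: "odd (l - 1)" using l by simp
    have Meven: "even M" unfolding M_def using oddl1 p(2) by simp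
    have Leven: "even L" unfolding Lv using oddl1 p(2) by simp
    have nL: "\<not> p dvd L"
    proof (cases "r = 1")
      case True
      then have "L = l" unfolding Lv using l by simp
      then show ?thesis using l by (auto dest: dvd_imp_le)
    next
      case False
      then have "p dvd (l - 1) * p ^ (r - 1)" using r by (simp add: dvd_power)
      show ?thesis
      proof
        assume "p dvd L"
        then have "p dvd (l - 1) * p ^ (r - 1) + 1" unfolding Lv .
        then have "p dvd 1" using dvd_add_right_iff[OF \<open>p dvd (l - 1) * p ^ (r - 1)\<close>] by blast
        then show False using p5 by simp
      qed
    qed
    have nM: "\<not> p dvd M"
    proof
      assume "p dvd M"
      moreover have "p dvd (l - 1) * p ^ r" using r by (simp add: dvd_power)
      ultimately have "p dvd 1" unfolding M_def using dvd_add_right_iff by blast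
      then show False using p5 by simp
    qed
    have rL: "r \<le> L - 1"
    proof -
      have "r \<le> p ^ (r - 1)" using r p5 by (intro r_le_pow) auto
      also have "\<dots> \<le> (l - 1) * p ^ (r - 1)" using l by simp
      finally show ?thesis unfolding Lv by simp
    qed
    have rM: "r \<le> M - 1"
    proof -
      have "r \<le> p ^ (r - 1)" using r p5 by (intro r_le_pow) auto
      also have "\<dots> \<le> p ^ r" using p5 by (simp add: power_increasing)
      also have "\<dots> \<le> (l - 1) * p ^ r" using l by simp
      finally show ?thesis unfolding M_def by simp
    qed
    have cgLM: "[L = M] (mod totient (p ^ r))" unfolding MeqL tot_def by (simp add: cong_def)
    have ndL: "\<not> (p - 1) dvd L"
    proof
      assume "(p - 1) dvd L"
      then have "L mod (p - 1) = 0" by simp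
      moreover have "L mod (p - 1) = l" using Lmod l unfolding cong_def by simp
      ultimately show False using l by simp
    qed
    have ordr: "int (p ^ r) dvd num (bernoulli L / of_nat L)"
      using order r unfolding psi_irr_def L_def by auto
    define a where "a = num (bernoulli M / of_nat M)"
    have pa: "int p ^ r dvd a" unfolding a_def
      by (rule kummer_dvd[OF p(1) p5 r L2 Leven nL rL M2 Meven nM rM cgLM ndL]) (use ordr in simp)
    have a0: "a \<noteq> 0"
    proof -
      have "bernoulli M \<noteq> 0" by (rule bernoulli_even_nz[OF Meven M2])
      then have "bernoulli M / of_nat M \<noteq> 0" using M2 by simp
      then show ?thesis unfolding a_def by (simp add: num_zero_iff)
    qed
    have iM: "int M - 1 = int (l - 1) * int p ^ r" unfolding M_def by simp
    have memM: "M \<in> A_set p r L \<longleftrightarrow> (\<forall>q. prime q \<longrightarrow> q dvd (l - 1) \<longrightarrow> \<not> int q dvd a)"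
    proof -
      have "M \<in> A_set p r L \<longleftrightarrow> gcd a (int (l - 1) * int p ^ r) = int p ^ r"
        using mem[of M] MeqL a0 unfolding a_def[symmetric] iM by blast
      also have "\<dots> \<longleftrightarrow> (\<forall>q. prime q \<longrightarrow> q dvd (l - 1) \<longrightarrow> \<not> int q dvd a)"
        by (rule gcd_piece[OF p(1) pa]) (use l in auto)
      finally show ?thesis .
    qed
    have qeq: "int q dvd a \<longleftrightarrow> (\<exists>l'. irregular_pair q l' \<and> [(l - 1) * p ^ r = l' - 1] (mod (q - 1)))"
      if "prime q" "q dvd (l - 1)" for q
      unfolding a_def by (rule q_lemma[OF p l(1,2) r M_def that])
    have lhs: "(A_set p r L \<noteq> {} \<and> A p r L = (L - 1) * p + 1 \<and> A p r L = (l - 1) * p ^ r + 1)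
               \<longleftrightarrow> M \<in> A_set p r L"
    proof
      assume h: "A_set p r L \<noteq> {} \<and> A p r L = (L - 1) * p + 1 \<and> A p r L = (l - 1) * p ^ r + 1"
      then obtain m where "m \<in> A_set p r L" by blast
      then have "A p r L \<in> A_set p r L" unfolding A_def by (rule LeastI)
      moreover have "A p r L = M" using h unfolding M_def by blast
      ultimately show "M \<in> A_set p r L" by simp
    next
      assume h: "M \<in> A_set p r L"
      have "A p r L = M" unfolding A_def
      proof (rule Least_equality)
        show "M \<in> A_set p r L" by (rule h)
        fix y assume "y \<in> A_set p r L"
        then show "M \<le> y" using part2 unfolding M_def by blast
      qed
      then show "A_set p r L \<noteq> {} \<and> A p r L = (L - 1) * p + 1 \<and> A p r L = (l - 1) * p ^ r + 1"
        using h LM unfolding M_def by auto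
    qed
    have rhs: "((\<not> (\<exists>q. prime q \<and> q dvd (l - 1) \<and> irregular_prime q))
          \<or> (\<forall>q. prime q \<and> q dvd (l - 1) \<and> irregular_prime q \<longrightarrow>
               (\<forall>l'. irregular_pair q l' \<longrightarrow>
                  \<not> [(l - 1) * p ^ r = l' - 1] (mod (q - 1)))))
       \<longleftrightarrow> (\<forall>q. prime q \<longrightarrow> q dvd (l - 1) \<longrightarrow>
               \<not> (\<exists>l'. irregular_pair q l' \<and> [(l - 1) * p ^ r = l' - 1] (mod (q - 1))))"
    proof
      assume "(\<not> (\<exists>q. prime q \<and> q dvd (l - 1) \<and> irregular_prime q))
          \<or> (\<forall>q. prime q \<and> q dvd (l - 1) \<and> irregular_prime q \<longrightarrow>
               (\<forall>l'. irregular_pair q l' \<longrightarrow>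
                  \<not> [(l - 1) * p ^ r = l' - 1] (mod (q - 1))))"
      then show "\<forall>q. prime q \<longrightarrow> q dvd (l - 1) \<longrightarrow>
               \<not> (\<exists>l'. irregular_pair q l' \<and> [(l - 1) * p ^ r = l' - 1] (mod (q - 1)))"
      proof
        assume h: "\<not> (\<exists>q. prime q \<and> q dvd (l - 1) \<and> irregular_prime q)"
        show ?thesis
        proof (intro allI impI notI)
          fix q assume q: "prime q" "q dvd (l - 1)" "\<exists>l'. irregular_pair q l' \<and> [(l - 1) * p ^ r = l' - 1] (mod (q - 1))"
          then have "irregular_prime q" unfolding irregular_prime_def irregular_pair_def by blast
          then show False using h q by blast
        qed
      next
        assume h: "\<forall>q. prime q \<and> q dvd (l - 1) \<and> irregular_prime q \<longrightarrow>
               (\<forall>l'. irregular_pair q l' \<longrightarrow>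
                  \<not> [(l - 1) * p ^ r = l' - 1] (mod (q - 1)))"
        show ?thesis
        proof (intro allI impI notI)
          fix q assume q: "prime q" "q dvd (l - 1)" "\<exists>l'. irregular_pair q l' \<and> [(l - 1) * p ^ r = l' - 1] (mod (q - 1))"
          then obtain l' where l': "irregular_pair q l'" "[(l - 1) * p ^ r = l' - 1] (mod (q - 1))" by blast
          then have "irregular_prime q" unfolding irregular_prime_def irregular_pair_def by blast
          then show False using h q l' by blast
        qed
      qed
    next
      assume h: "\<forall>q. prime q \<longrightarrow> q dvd (l - 1) \<longrightarrow>
               \<not> (\<exists>l'. irregular_pair q l' \<and> [(l - 1) * p ^ r = l' - 1] (mod (q - 1)))"
      have "\<forall>q. prime q \<and> q dvd (l - 1) \<and> irregular_prime q \<longrightarrow>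
               (\<forall>l'. irregular_pair q l' \<longrightarrow>
                  \<not> [(l - 1) * p ^ r = l' - 1] (mod (q - 1)))"
        using h by blast
      then show "(\<not> (\<exists>q. prime q \<and> q dvd (l - 1) \<and> irregular_prime q))
          \<or> (\<forall>q. prime q \<and> q dvd (l - 1) \<and> irregular_prime q \<longrightarrow>
               (\<forall>l'. irregular_pair q l' \<longrightarrow>
                  \<not> [(l - 1) * p ^ r = l' - 1] (mod (q - 1))))" by blast
    qed
    have mid: "(\<forall>q. prime q \<longrightarrow> q dvd (l - 1) \<longrightarrow> \<not> int q dvd a) \<longleftrightarrow>
       (\<forall>q. prime q \<longrightarrow> q dvd (l - 1) \<longrightarrow>
               \<not> (\<exists>l'. irregular_pair q l' \<and> [(l - 1) * p ^ r = l' - 1] (mod (q - 1))))"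
      using qeq by blast
    show ?thesis unfolding lhs memM mid rhs ..
  qed
  have part3': "(\<forall>\<nu>\<in>{2..r}. s \<nu> = l - 1) \<longrightarrow> ((A_set p r L \<noteq> {} \<and> A p r L = (L - 1) * p + 1 \<and> A p r L = (l - 1) * p ^ r + 1)
         \<longleftrightarrow>
         ((\<not> (\<exists>q. prime q \<and> q dvd (l - 1) \<and> irregular_prime q))
          \<or> (\<forall>q. prime q \<and> q dvd (l - 1) \<and> irregular_prime q \<longrightarrow>
               (\<forall>l'. irregular_pair q l' \<longrightarrow>
                  \<not> [(l - 1) * p ^ r = l' - 1] (mod (q - 1))))))"
    using part3 by (rule impI)
  show ?thesis unfolding L_def[symmetric] using part1 part2 part3' by (intro conjI)
qed

end
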